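(* Let $m_X,m_Y,\Omega_X,\Omega_Y,\alpha>0$ and for $\bar\gamma>0$ let $\overline{C}(\bar\gamma)=\mathbb{E}[\log_2(1+\gamma)]$, where $\gamma$ is the instantaneous SNR of the $\alpha$-Beaulieu–Xie shadowed channel with average SNR $\bar\gamma$. Define $$A(\bar\gamma)=\frac{2}{\alpha\ln 2}\left(\ln\!\big(\mathrm{C}_\alpha\bar\gamma^{\alpha/2}\big)+\psi(m_X)+(1-\bar\beta)^{m_Y}\,{}_2F_1^{(1,0,0,0)}(m_X,m_Y;m_X;\bar\beta)\right),$$ where $\psi$ is the digamma function and ${}_2F_1^{(1,0,0,0)}(a,b;c;z)=\frac{\partial}{\partial a}{}_2F_1(a,b;c;z)$. Then $\mathbb{E}[\log_2\gamma]=A(\bar\gamma)$ and $\lim_{\bar\gamma\to\infty}\big(\overline{C}(\bar\gamma)-A(\bar\gamma)\big)=0$.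
   Context: Fix parameters $m_X,m_Y,\Omega_X,\Omega_Y>0$. The Beaulieu–Xie shadowed envelope is a random variable $\bar R>0$ with density $$f_{\bar R}(r)=\frac{2r^{2m_X-1}}{\Gamma(m_X)}\left(\frac{m_Y\Omega_X}{m_Y\Omega_X+m_X\Omega_Y}\right)^{m_Y}\left(\frac{m_X}{\Omega_X}\right)^{m_X}{}_1F_1\!\left(m_Y;m_X;\frac{m_X^2\Omega_Y r^2}{\Omega_X(m_Y\Omega_X+m_X\Omega_Y)}\right)e^{-\frac{m_X}{\Omega_X}r^2},\quad r>0.$$ Set $\bar\beta=\frac{m_X\Omega_Y}{m_Y\Omega_X+m_X\Omega_Y}$. For $\alpha>0$ put $$\mathrm{C}_\alpha=\left[\frac{\Gamma(m_X)}{\Gamma(m_X+\frac{2}{\alpha})\,{}_2F_1\!\left(m_Y,-\frac{2}{\alpha};m_X;-\frac{m_X\Omega_Y}{m_Y\Omega_X}\right)}\right]^{\alpha/2}.$$ For $\bar\gamma>0$, the instantaneous SNR of the $\alpha$-Beaulieu–Xie shadowed channel with average SNR $\bar\gamma$ is the random variable $\gamma=\bar\gamma\,\big(\mathrm{C}_\alpha m_X\bar R^2/\Omega_X\big)^{2/\alpha}$. Here ${}_1F_1(a;b;z)=\sum_{n\ge0}\frac{(a)_n}{(b)_n}\frac{z^n}{n!}$, ${}_2F_1$ is the Gauss hypergeometric function. *)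

theory Defs
  imports "HOL-Analysis.Analysis"
begin

definition hyp1F1 :: "real \<Rightarrow> real \<Rightarrow> real \<Rightarrow> real" where
  "hyp1F1 a b z = (\<Sum>n. pochhammer a n / pochhammer b n * z ^ n / fact n)"

definition hyp2F1_series :: "real \<Rightarrow> real \<Rightarrow> real \<Rightarrow> real \<Rightarrow> real" where
  "hyp2F1_series a b c z =
     (\<Sum>n. pochhammer a n * pochhammer b n / (pochhammer c n * fact n) * z ^ n)"

text \<open>Gauss hypergeometric function on the real half-line z < 1 (principal branch):
  the series for |z| < 1, and for z \<le> -1 the analytic continuation given by the
  Pfaff transformation 2F1(a,b;c;z) = (1-z)^(-a) 2F1(a,c-b;c;z/(z-1)).\<close>
definition hyp2F1 :: "real \<Rightarrow> real \<Rightarrow> real \<Rightarrow> real \<Rightarrow> real" where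
  "hyp2F1 a b c z =
     (if \<bar>z\<bar> < 1 then hyp2F1_series a b c z
      else (1 - z) powr (- a) * hyp2F1_series a (c - b) c (z / (z - 1)))"

definition BX_pdf :: "real \<Rightarrow> real \<Rightarrow> real \<Rightarrow> real \<Rightarrow> real \<Rightarrow> real" where
  "BX_pdf mX mY OX OY r =
     2 * r powr (2 * mX - 1) / Gamma mX
     * (mY * OX / (mY * OX + mX * OY)) powr mY
     * (mX / OX) powr mX
     * hyp1F1 mY mX (mX\<^sup>2 * OY * r\<^sup>2 / (OX * (mY * OX + mX * OY)))
     * exp (- (mX / OX) * r\<^sup>2)"

definition BX_beta :: "real \<Rightarrow> real \<Rightarrow> real \<Rightarrow> real \<Rightarrow> real" where
  "BX_beta mX mY OX OY = mX * OY / (mY * OX + mX * OY)"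

definition C_alpha :: "real \<Rightarrow> real \<Rightarrow> real \<Rightarrow> real \<Rightarrow> real \<Rightarrow> real" where
  "C_alpha mX mY OX OY \<alpha> =
     (Gamma mX / (Gamma (mX + 2 / \<alpha>) * hyp2F1 mY (- 2 / \<alpha>) mX (- (mX * OY) / (mY * OX))))
       powr (\<alpha> / 2)"

definition aBX_snr :: "real \<Rightarrow> real \<Rightarrow> real \<Rightarrow> real \<Rightarrow> real \<Rightarrow> real \<Rightarrow> real \<Rightarrow> real" where
  "aBX_snr mX mY OX OY \<alpha> \<gamma>b r = \<gamma>b * (C_alpha mX mY OX OY \<alpha> * mX * r\<^sup>2 / OX) powr (2 / \<alpha>)"

definition ergodic_capacity :: "real \<Rightarrow> real \<Rightarrow> real \<Rightarrow> real \<Rightarrow> real \<Rightarrow> real \<Rightarrow> real" where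
  "ergodic_capacity mX mY OX OY \<alpha> \<gamma>b =
     (LINT r:{0<..}|lborel. BX_pdf mX mY OX OY r * log 2 (1 + aBX_snr mX mY OX OY \<alpha> \<gamma>b r))"

definition hyp2F1_da :: "real \<Rightarrow> real \<Rightarrow> real \<Rightarrow> real \<Rightarrow> real" where
  "hyp2F1_da a b c z = deriv (\<lambda>t. hyp2F1 t b c z) a"

definition asym_A :: "real \<Rightarrow> real \<Rightarrow> real \<Rightarrow> real \<Rightarrow> real \<Rightarrow> real \<Rightarrow> real" where
  "asym_A mX mY OX OY \<alpha> \<gamma>b =
     2 / (\<alpha> * ln 2) *
       (ln (C_alpha mX mY OX OY \<alpha> * \<gamma>b powr (\<alpha> / 2)) + Digamma mX
        + (1 - BX_beta mX mY OX OY) powr mY * hyp2F1_da mX mY mX (BX_beta mX mY OX OY))"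

end

theory Submission
  imports Defs "HOL-Real_Asymp.Real_Asymp" "HOL-Computational_Algebra.Formal_Power_Series"
begin


lemma ratio_summable:
  fixes f :: "nat \<Rightarrow> real"
  assumes "r \<longlonglongrightarrow> L" "L < 1" "\<And>n. norm (f (Suc n)) = r n * norm (f n)"
  shows "summable f"
proof -
  have "(1+L)/2 > L" using assms(2) by simp
  from order_tendstoD(2)[OF assms(1) this]
  have "eventually (\<lambda>n. r n < (1+L)/2) sequentially" .
  then obtain N where N: "\<And>n. n \<ge> N \<Longrightarrow> r n < (1+L)/2" by (auto simp: eventually_sequentially)
  show ?thesis
  proof (rule summable_ratio_test[of "(1+L)/2" N])
    show "(1+L)/2 < 1" using assms(2) by simp
    fix n assume "n \<ge> N"
    then show "norm (f (Suc n)) \<le> (1 + L) / 2 * norm (f n)"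
    proof -
      have "r n * norm (f n) \<le> (1+L)/2 * norm (f n)"
        by (intro mult_right_mono) (use N[of n] \<open>n \<ge> N\<close> in auto)
      then show ?thesis by (simp only: assms(3))
    qed
  qed
qed

definition t2 :: "real \<Rightarrow> real \<Rightarrow> real \<Rightarrow> real \<Rightarrow> nat \<Rightarrow> real" where
  "t2 p q c w n = pochhammer p n * pochhammer q n / (pochhammer c n * fact n) * w ^ n"

definition t1 :: "real \<Rightarrow> real \<Rightarrow> real \<Rightarrow> nat \<Rightarrow> real" where
  "t1 p c y n = pochhammer p n / pochhammer c n * y ^ n / fact n"

lemma poch_pos: "c > 0 \<Longrightarrow> pochhammer (c::real) n > 0"
  by (simp add: pochhammer_pos)

lemma summable_t2:
  assumes "c > 0" "\<bar>w\<bar> < 1"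
  shows "summable (\<lambda>n. norm (t2 p q c w n))"
proof (rule ratio_summable)
  show "(\<lambda>n. \<bar>p + real n\<bar> * \<bar>q + real n\<bar> / ((c + real n) * (real n + 1)) * \<bar>w\<bar>) \<longlonglongrightarrow> 1 * \<bar>w\<bar>"
    by (intro tendsto_mult tendsto_const) (use assms in real_asymp)
  show "1 * \<bar>w\<bar> < 1" using assms by simp
  fix n
  have "c + real n > 0" using assms by simp
  have "t2 p q c w (Suc n) = t2 p q c w n * ((p + real n) * (q + real n) / ((c + real n) * (real n + 1)) * w)"
    using poch_pos[OF assms(1), of n] \<open>c + real n > 0\<close>
    by (simp add: t2_def pochhammer_Suc field_simps)
  then show "norm (norm (t2 p q c w (Suc n))) =
    \<bar>p + real n\<bar> * \<bar>q + real n\<bar> / ((c + real n) * (real n + 1)) * \<bar>w\<bar> * norm (norm (t2 p q c w n))"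
    using \<open>c + real n > 0\<close> by (simp add: abs_mult abs_divide)
qed

lemma summable_t1:
  assumes "c > 0"
  shows "summable (\<lambda>n. norm (t1 p c y n))"
proof (rule ratio_summable)
  show "(\<lambda>n. \<bar>p + real n\<bar> / ((c + real n) * (real n + 1)) * \<bar>y\<bar>) \<longlonglongrightarrow> 0 * \<bar>y\<bar>"
    by (intro tendsto_mult tendsto_const) (use assms in real_asymp)
  show "0 * \<bar>y\<bar> < 1" by simp
  fix n
  have "c + real n > 0" using assms by simp
  have "t1 p c y (Suc n) = t1 p c y n * ((p + real n) / ((c + real n) * (real n + 1)) * y)"
    using poch_pos[OF assms(1), of n] \<open>c + real n > 0\<close>
    by (simp add: t1_def pochhammer_Suc field_simps)
  then show "norm (norm (t1 p c y (Suc n))) =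
    \<bar>p + real n\<bar> / ((c + real n) * (real n + 1)) * \<bar>y\<bar> * norm (norm (t1 p c y n))"
    using \<open>c + real n > 0\<close> by (simp add: abs_mult abs_divide)
qed


lemma Gamma_lborel:
  fixes s :: real
  assumes "s > 0"
  shows "set_integrable lborel {0<..} (\<lambda>x. x powr (s-1) * exp (-x))"
    and "(LINT x:{0<..}|lborel. x powr (s-1) * exp (-x)) = Gamma s"
proof -
  let ?f = "\<lambda>x::real. x powr (s-1) * exp (-x)"
  have h0: "((\<lambda>t. t powr (s-1) / exp t) has_integral Gamma s) {0..}"
    by (rule Gamma_integral_real[OF assms])
  have h0': "(?f has_integral Gamma s) {0..}"
    using h0 by (simp add: exp_minus divide_inverse)
  have "((\<lambda>t. if t \<in> {0<..} then ?f t else 0) has_integral Gamma s) {0..}"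
    by (rule has_integral_spike [of "{0}", rotated 2, OF h0']) auto
  also have "?this = (?f has_integral Gamma s) {0<..}"
    by (subst has_integral_restrict) auto
  finally have h: "(?f has_integral Gamma s) {0<..}" .
  have "?f absolutely_integrable_on {0<..}"
    by (rule nonnegative_absolutely_integrable_1) (use h in auto)
  then have "integrable lebesgue (\<lambda>x. indicator {0<..} x *\<^sub>R ?f x)"
    by (simp add: set_integrable_def)
  then show si: "set_integrable lborel {0<..} ?f"
    unfolding set_integrable_def by (subst (asm) integrable_completion) auto
  show "(LINT x:{0<..}|lborel. ?f x) = Gamma s"
    using set_borel_integral_eq_integral(2)[OF si] h by (simp add: integral_unique)
qed


lemma eventually_le_sq:
  fixes k x :: real assumes "k > 0"
  shows "eventually (\<lambda>n. x \<le> k * (real (Suc n))\<^sup>2) sequentially"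
proof -
  obtain N :: nat where N: "x / k \<le> real N" using real_arch_simple by blast
  show ?thesis unfolding eventually_sequentially
  proof (intro exI allI impI)
    fix n assume "N \<le> n"
    then have "x / k \<le> real (Suc n)" using N by linarith
    also have "\<dots> \<le> (real (Suc n))\<^sup>2" by (simp add: power2_eq_square)
    finally show "x \<le> k * (real (Suc n))\<^sup>2" using assms by (simp add: field_simps)
  qed
qed

lemma nn_subst_sq0:
  fixes k :: real and f :: "real \<Rightarrow> ennreal"
  assumes k: "k > 0" and f[measurable]: "f \<in> borel_measurable borel"
  shows "(\<integral>\<^sup>+x. f x * indicator {0..} x \<partial>lborel) =
         (\<integral>\<^sup>+r. f (k*r\<^sup>2) * ennreal (2*k*r) * indicator {0..} r \<partial>lborel)"
proof -
  have eq: "(\<integral>\<^sup>+x. f x * indicator {0..k*(real (Suc n))\<^sup>2} x \<partial>lborel) =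
         (\<integral>\<^sup>+r. f (k*r\<^sup>2) * ennreal (2*k*r) * indicator {0..real (Suc n)} r \<partial>lborel)" for n
  proof -
    have "(\<integral>\<^sup>+x. f x * indicator {(\<lambda>r. k*r\<^sup>2) 0..(\<lambda>r. k*r\<^sup>2) (real (Suc n))} x \<partial>lborel) =
         (\<integral>\<^sup>+r. f ((\<lambda>r. k*r\<^sup>2) r) * ennreal ((\<lambda>r. 2*k*r) r) * indicator {0..real (Suc n)} r \<partial>lborel)"
      by (rule nn_integral_substitution_aux[where g="\<lambda>r. k*r\<^sup>2" and g'="\<lambda>r. 2*k*r"])
         (use k in \<open>auto intro!: derivative_eq_intros continuous_intros\<close>)
    then show ?thesis by simp
  qed
  have L1: "(\<lambda>n. \<integral>\<^sup>+x. f x * indicator {0..k*(real (Suc n))\<^sup>2} x \<partial>lborel)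
      \<longlonglongrightarrow> (\<integral>\<^sup>+x. f x * indicator {0..} x \<partial>lborel)"
  proof (rule nn_integral_LIMSEQ)
    show "incseq (\<lambda>n x. f x * indicator {0..k*(real (Suc n))\<^sup>2} x)"
    proof (rule incseq_SucI, rule le_funI)
      fix n x
      have "k*(real (Suc n))\<^sup>2 \<le> k*(real (Suc (Suc n)))\<^sup>2"
        using k by (intro mult_left_mono power_mono) auto
      then show "f x * indicator {0..k*(real (Suc n))\<^sup>2} x \<le> f x * indicator {0..k*(real (Suc (Suc n)))\<^sup>2} x"
        by (auto split: split_indicator)
    qed
    show "(\<lambda>n. f x * indicator {0..k*(real (Suc n))\<^sup>2} x) \<longlonglongrightarrow> f x * indicator {0..} x" for x
    proof (rule tendsto_eventually)
      show "eventually (\<lambda>n. f x * indicator {0..k*(real (Suc n))\<^sup>2} x = f x * indicator {0..} x) sequentially"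
        using eventually_le_sq[OF k, of x] by eventually_elim (auto split: split_indicator)
    qed
  qed simp
  have L2: "(\<lambda>n. \<integral>\<^sup>+r. f (k*r\<^sup>2) * ennreal (2*k*r) * indicator {0..real (Suc n)} r \<partial>lborel)
      \<longlonglongrightarrow> (\<integral>\<^sup>+r. f (k*r\<^sup>2) * ennreal (2*k*r) * indicator {0..} r \<partial>lborel)"
  proof (rule nn_integral_LIMSEQ)
    show "incseq (\<lambda>n r. f (k*r\<^sup>2) * ennreal (2*k*r) * indicator {0..real (Suc n)} r)"
      by (rule incseq_SucI, rule le_funI) (auto split: split_indicator)
    show "(\<lambda>n. f (k*r\<^sup>2) * ennreal (2*k*r) * indicator {0..real (Suc n)} r) \<longlonglongrightarrow> f (k*r\<^sup>2) * ennreal (2*k*r) * indicator {0..} r" for r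
    proof (rule tendsto_eventually)
      obtain N :: nat where N: "r \<le> real N" using real_arch_simple by blast
      show "eventually (\<lambda>n. f (k*r\<^sup>2) * ennreal (2*k*r) * indicator {0..real (Suc n)} r = f (k*r\<^sup>2) * ennreal (2*k*r) * indicator {0..} r) sequentially"
        unfolding eventually_sequentially using N
        by (intro exI[of _ N]) (auto split: split_indicator)
    qed
  qed simp
  from LIMSEQ_unique[OF L1 L2[folded eq]] show ?thesis .
qed

lemma nn_subst_sq:
  fixes k :: real and f :: "real \<Rightarrow> ennreal"
  assumes k: "k > 0" and f[measurable]: "f \<in> borel_measurable borel"
  shows "(\<integral>\<^sup>+x. f x * indicator {0<..} x \<partial>lborel) =
         (\<integral>\<^sup>+r. f (k*r\<^sup>2) * ennreal (2*k*r) * indicator {0<..} r \<partial>lborel)"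
proof -
  have "(\<integral>\<^sup>+x. f x * indicator {0<..} x \<partial>lborel) = (\<integral>\<^sup>+x. f x * indicator {0..} x \<partial>lborel)"
    by (intro nn_integral_cong_AE) (use AE_lborel_singleton[of 0] in \<open>eventually_elim, auto split: split_indicator\<close>)
  also have "\<dots> = (\<integral>\<^sup>+r. f (k*r\<^sup>2) * ennreal (2*k*r) * indicator {0..} r \<partial>lborel)"
    by (rule nn_subst_sq0[OF k f])
  also have "\<dots> = (\<integral>\<^sup>+r. f (k*r\<^sup>2) * ennreal (2*k*r) * indicator {0<..} r \<partial>lborel)"
    by (intro nn_integral_cong_AE) (use AE_lborel_singleton[of 0] in \<open>eventually_elim, auto split: split_indicator\<close>)
  finally show ?thesis .
qed


lemma subst_sq:
  fixes k :: real and \<Phi> :: "real \<Rightarrow> real"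
  assumes k: "k > 0" and [measurable]: "\<Phi> \<in> borel_measurable borel"
  shows "set_integrable lborel {0<..} (\<lambda>r. 2*k*r * \<Phi> (k*r\<^sup>2)) \<longleftrightarrow> set_integrable lborel {0<..} \<Phi>"
    and "(LINT r:{0<..}|lborel. 2*k*r * \<Phi> (k*r\<^sup>2)) = (LINT x:{0<..}|lborel. \<Phi> x)"
proof -
  define N :: "real measure" where "N = density lborel (\<lambda>r. ennreal (2*k*r * indicator {0<..} r))"
  define D :: "real measure" where "D = density lborel (\<lambda>x. ennreal (indicator {0<..} x :: real))"
  have meq: "distr N borel (\<lambda>r. k*r\<^sup>2) = D"
  proof (rule measure_eqI)
    show "sets (distr N borel (\<lambda>r. k*r\<^sup>2)) = sets D" by (simp add: N_def D_def)
    fix A assume "A \<in> sets (distr N borel (\<lambda>r. k*r\<^sup>2))"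
    then have A[measurable]: "A \<in> sets borel" by simp
    have gm: "(\<lambda>r::real. k*r\<^sup>2) \<in> borel_measurable borel" by measurable
    have pre: "(\<lambda>r::real. k*r\<^sup>2) -` A \<in> sets borel"
      using measurable_sets[OF gm A] by simp
    have "emeasure (distr N borel (\<lambda>r. k*r\<^sup>2)) A = emeasure N ((\<lambda>r. k*r\<^sup>2) -` A \<inter> space N)"
      by (rule emeasure_distr) (auto simp: N_def)
    also have "\<dots> = (\<integral>\<^sup>+r. ennreal (2*k*r * indicator {0<..} r) * indicator ((\<lambda>r. k*r\<^sup>2) -` A) r \<partial>lborel)"
      unfolding N_def by (subst emeasure_density) (use pre in auto)
    also have "\<dots> = (\<integral>\<^sup>+r. indicator A (k*r\<^sup>2) * ennreal (2*k*r) * indicator {0<..} r \<partial>lborel)"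
      by (intro nn_integral_cong) (auto split: split_indicator)
    also have "\<dots> = (\<integral>\<^sup>+x. indicator A x * indicator {0<..} x \<partial>lborel)"
      by (rule nn_subst_sq[OF k, symmetric]) simp
    also have "\<dots> = emeasure D A"
      unfolding D_def by (subst emeasure_density) (auto intro!: nn_integral_cong split: split_indicator)
    finally show "emeasure (distr N borel (\<lambda>r. k*r\<^sup>2)) A = emeasure D A" .
  qed
  have i1: "set_integrable lborel {0<..} \<Phi> \<longleftrightarrow> integrable D \<Phi>"
    unfolding set_integrable_def D_def by (subst integrable_density) auto
  have i2: "integrable D \<Phi> \<longleftrightarrow> integrable N (\<lambda>r. \<Phi> (k*r\<^sup>2))"
    unfolding meq[symmetric] by (subst integrable_distr_eq) (auto simp: N_def)
  have i3: "integrable N (\<lambda>r. \<Phi> (k*r\<^sup>2)) \<longleftrightarrow> set_integrable lborel {0<..} (\<lambda>r. 2*k*r * \<Phi> (k*r\<^sup>2))"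
    unfolding set_integrable_def N_def
    by (subst integrable_density) (use k in \<open>auto intro!: AE_I2 arg_cong[where f="integrable lborel"] ext split: split_indicator\<close>)
  show "set_integrable lborel {0<..} (\<lambda>r. 2*k*r * \<Phi> (k*r\<^sup>2)) \<longleftrightarrow> set_integrable lborel {0<..} \<Phi>"
    using i1 i2 i3 by simp
  have j1: "(LINT x:{0<..}|lborel. \<Phi> x) = integral\<^sup>L D \<Phi>"
    unfolding set_lebesgue_integral_def D_def by (subst integral_density) auto
  have j2: "integral\<^sup>L D \<Phi> = integral\<^sup>L N (\<lambda>r. \<Phi> (k*r\<^sup>2))"
    unfolding meq[symmetric] by (subst integral_distr) (auto simp: N_def)
  have j3: "integral\<^sup>L N (\<lambda>r. \<Phi> (k*r\<^sup>2)) = (LINT r:{0<..}|lborel. 2*k*r * \<Phi> (k*r\<^sup>2))"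
    unfolding set_lebesgue_integral_def N_def
    by (subst integral_density) (use k in \<open>auto intro!: AE_I2 Bochner_Integration.integral_cong split: split_indicator\<close>)
  show "(LINT r:{0<..}|lborel. 2*k*r * \<Phi> (k*r\<^sup>2)) = (LINT x:{0<..}|lborel. \<Phi> x)"
    using j1 j2 j3 by simp
qed


lemma pos_not_nonpos_Int: "(z::real) > 0 \<Longrightarrow> z \<notin> \<int>\<^sub>\<le>\<^sub>0"
  by (auto elim!: nonpos_Ints_cases)

lemma poch_Gamma: 
  assumes "(z::real) > 0" shows "Gamma (z + real n) = Gamma z * pochhammer z n"
proof -
  have "pochhammer z n = Gamma (z + real n) / Gamma z"
    using pochhammer_Gamma[of z n] pos_not_nonpos_Int[OF assms] by simp
  moreover have "Gamma z > 0" using Gamma_real_pos[OF assms] .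
  ultimately show ?thesis by simp
qed

definition gfun :: "real \<Rightarrow> real \<Rightarrow> real \<Rightarrow> real \<Rightarrow> real" where
  "gfun a b \<beta> x = (1-\<beta>) powr b / Gamma a * x powr (a-1) * hyp1F1 b a (\<beta>*x) * exp (-x)"

lemma hyp1F1_sums: "a > 0 \<Longrightarrow> t1 b a y sums hyp1F1 b a y"
proof -
  assume a: "a > 0"
  have "summable (t1 b a y)" using summable_t1[OF a, of b y] by (rule summable_norm_cancel)
  then have "t1 b a y sums suminf (t1 b a y)" by (rule summable_sums)
  moreover have "suminf (t1 b a y) = hyp1F1 b a y" unfolding hyp1F1_def t1_def by simp
  ultimately show ?thesis by simp
qed
context
  fixes a b \<beta> :: real
  assumes a: "a > 0" and b: "b > 0" and \<beta>0: "0 \<le> \<beta>" and \<beta>1: "\<beta> < 1"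
begin

definition "cf h n = (1-\<beta>) powr b / Gamma a * (pochhammer b n / (pochhammer a n * fact n) * \<beta>^n)"

lemma cf_nonneg: "cf h n \<ge> 0"
  unfolding cf_def using a b \<beta>0 poch_pos[OF a, of n] poch_pos[OF b, of n] Gamma_real_pos[OF a]
  by (intro mult_nonneg_nonneg divide_nonneg_nonneg) auto

lemma gfun_sums:
  assumes x: "x > 0"
  shows "(\<lambda>n. cf h n * (x powr (a+h+real n-1) * exp (-x))) sums (gfun a b \<beta> x * x powr h)"
proof -
  define c where "c = (1-\<beta>) powr b / Gamma a * x powr (a-1) * exp(-x) * x powr h"
  have "(\<lambda>n. c * t1 b a (\<beta>*x) n) sums (c * hyp1F1 b a (\<beta>*x))"
    by (rule sums_mult[OF hyp1F1_sums[OF a]])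
  moreover have "c * t1 b a (\<beta>*x) n = cf h n * (x powr (a+h+real n-1) * exp (-x))" for n
  proof -
    have "x powr (a+h+real n-1) = x powr ((a-1) + h + real n)" by (simp add: algebra_simps)
    also have "\<dots> = x powr (a-1) * x powr h * x powr (real n)" by (simp only: powr_add)
    also have "\<dots> = x powr (a-1) * x powr h * x ^ n" using x by (simp add: powr_realpow)
    finally have "x powr (a+h+real n-1) = x powr (a-1) * x powr h * x ^ n" .
    then show ?thesis
      unfolding c_def cf_def t1_def by (simp add: power_mult_distrib field_simps)
  qed
  moreover have "c * hyp1F1 b a (\<beta>*x) = gfun a b \<beta> x * x powr h"
    unfolding c_def gfun_def by simp
  ultimately show ?thesis by simp
qed

lemma cf_integral:
  assumes h: "a + h > 0"
  shows "set_integrable lborel {0<..} (\<lambda>x. cf h n * (x powr (a+h+real n-1) * exp (-x)))"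
    and "(LINT x:{0<..}|lborel. cf h n * (x powr (a+h+real n-1) * exp (-x)))
          = (1-\<beta>) powr b * Gamma (a+h) / Gamma a * t2 (a+h) b a \<beta> n"
proof -
  have s: "a + h + real n > 0" using h by simp
  show "set_integrable lborel {0<..} (\<lambda>x. cf h n * (x powr (a+h+real n-1) * exp (-x)))"
    using Gamma_lborel(1)[OF s] by simp
  have "(LINT x:{0<..}|lborel. cf h n * (x powr (a+h+real n-1) * exp (-x))) = cf h n * Gamma (a+h+real n)"
    using Gamma_lborel(2)[OF s] by simp
  also have "\<dots> = (1-\<beta>) powr b * Gamma (a+h) / Gamma a * t2 (a+h) b a \<beta> n"
    unfolding cf_def t2_def poch_Gamma[OF h] using poch_pos[OF a, of n] by (simp add: field_simps)
  finally show "(LINT x:{0<..}|lborel. cf h n * (x powr (a+h+real n-1) * exp (-x)))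
          = (1-\<beta>) powr b * Gamma (a+h) / Gamma a * t2 (a+h) b a \<beta> n" .
qed

lemma moment:
  assumes h: "a + h > 0"
  shows "set_integrable lborel {0<..} (\<lambda>x. gfun a b \<beta> x * x powr h)"
    and "(LINT x:{0<..}|lborel. gfun a b \<beta> x * x powr h) =
           (1-\<beta>) powr b * Gamma (a+h) / Gamma a * hyp2F1_series (a+h) b a \<beta>"
proof -
  define u where "u n x = indicator {0<..} x *\<^sub>R (cf h n * (x powr (a+h+real n-1) * exp (-x)))" for n x
  have ui: "integrable lborel (u n)" for n
    using cf_integral(1)[OF h, of n] unfolding u_def set_integrable_def .
  have uint: "integral\<^sup>L lborel (u n) = (1-\<beta>) powr b * Gamma (a+h) / Gamma a * t2 (a+h) b a \<beta> n" for n
    using cf_integral(2)[OF h, of n] unfolding u_def set_lebesgue_integral_def .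
  have unn: "u n x \<ge> 0" for n x
    unfolding u_def using cf_nonneg[of h n] by (auto split: split_indicator)
  have usum: "(\<lambda>n. u n x) sums (indicator {0<..} x *\<^sub>R (gfun a b \<beta> x * x powr h))" for x
  proof (cases "x > 0")
    case True
    then show ?thesis unfolding u_def using gfun_sums[OF True, of h] by simp
  next
    case False
    then show ?thesis unfolding u_def by simp
  qed
  have G: "Gamma (a+h) > 0" "Gamma a > 0" using Gamma_real_pos h a by auto
  have sumt2: "summable (t2 (a+h) b a \<beta>)"
  proof (rule summable_norm_cancel, rule summable_t2[OF a])
    show "\<bar>\<beta>\<bar> < 1" using \<beta>0 \<beta>1 by simp
  qed
  have AEs: "AE x in lborel. summable (\<lambda>n. norm (u n x))"
  proof (rule AE_I2)
    fix x
    have "summable (\<lambda>n. u n x)" using usum[of x] by (rule sums_summable)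
    then show "summable (\<lambda>n. norm (u n x))" using unn[of _ x] by simp
  qed
  have sI: "summable (\<lambda>n. \<integral>x. norm (u n x) \<partial>lborel)"
  proof -
    have "(\<lambda>n. \<integral>x. norm (u n x) \<partial>lborel) = (\<lambda>n. (1-\<beta>) powr b * Gamma (a+h) / Gamma a * t2 (a+h) b a \<beta> n)"
      using unn uint by (intro ext) (simp add: abs_of_nonneg)
    then show ?thesis using summable_mult[OF sumt2] by simp
  qed
  have main1: "integrable lborel (\<lambda>x. \<Sum>n. u n x)"
    by (rule integrable_suminf[OF ui AEs sI])
  have main2: "(\<integral>x. (\<Sum>n. u n x) \<partial>lborel) = (\<Sum>n. integral\<^sup>L lborel (u n))"
    by (rule integral_suminf[OF ui AEs sI])
  have eqf: "(\<lambda>x. \<Sum>n. u n x) = (\<lambda>x. indicator {0<..} x *\<^sub>R (gfun a b \<beta> x * x powr h))"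
    using usum by (intro ext sums_unique[symmetric])
  show "set_integrable lborel {0<..} (\<lambda>x. gfun a b \<beta> x * x powr h)"
    using main1 unfolding eqf set_integrable_def .
  have "(LINT x:{0<..}|lborel. gfun a b \<beta> x * x powr h) = (\<Sum>n. integral\<^sup>L lborel (u n))"
    using main2 unfolding eqf set_lebesgue_integral_def .
  also have "\<dots> = (\<Sum>n. (1-\<beta>) powr b * Gamma (a+h) / Gamma a * t2 (a+h) b a \<beta> n)"
    by (simp add: uint)
  also have "\<dots> = (1-\<beta>) powr b * Gamma (a+h) / Gamma a * hyp2F1_series (a+h) b a \<beta>"
  proof -
    have "hyp2F1_series (a+h) b a \<beta> = suminf (t2 (a+h) b a \<beta>)"
      unfolding hyp2F1_series_def t2_def by (rule refl)
    then show ?thesis using suminf_mult[OF sumt2, of "(1-\<beta>) powr b * Gamma (a+h) / Gamma a"] by simp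
  qed
  finally show "(LINT x:{0<..}|lborel. gfun a b \<beta> x * x powr h) =
           (1-\<beta>) powr b * Gamma (a+h) / Gamma a * hyp2F1_series (a+h) b a \<beta>" .
qed

end


lemma dct_at:
  fixes s :: "real \<Rightarrow> 'a \<Rightarrow> real" and w f :: "'a \<Rightarrow> real"
  assumes "f \<in> borel_measurable M" "\<And>t. s t \<in> borel_measurable M" "integrable M w"
    and lim: "AE x in M. ((\<lambda>t. s t x) \<longlongrightarrow> f x) (at c)"
    and bound: "eventually (\<lambda>t. AE x in M. norm (s t x) \<le> w x) (at c)"
  shows "((\<lambda>t. integral\<^sup>L M (s t)) \<longlongrightarrow> integral\<^sup>L M f) (at c)"
proof (subst tendsto_at_iff_sequentially, intro allI impI)
  fix X :: "nat \<Rightarrow> real" assume X: "\<forall>i. X i \<in> UNIV - {c}" "X \<longlonglongrightarrow> c"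
  have XF: "filterlim X (at c) sequentially" using X by (intro filterlim_atI) auto
  from filterlim_iff[THEN iffD1, OF XF, rule_format, OF bound]
  obtain N where w: "\<And>n. N \<le> n \<Longrightarrow> AE x in M. norm (s (X n) x) \<le> w x"
    by (auto simp: eventually_sequentially)
  show "((\<lambda>t. integral\<^sup>L M (s t)) \<circ> X) \<longlonglongrightarrow> integral\<^sup>L M f"
    unfolding comp_def
  proof (rule LIMSEQ_offset[where k=N], rule integral_dominated_convergence)
    show "AE x in M. norm (s (X (n + N)) x) \<le> w x" for n
      by (rule w) auto
    show "AE x in M. (\<lambda>n. s (X (n + N)) x) \<longlonglongrightarrow> f x"
      using lim
    proof eventually_elim
      fix x assume "((\<lambda>t. s t x) \<longlongrightarrow> f x) (at c)"
      then have "(\<lambda>n. s (X n) x) \<longlonglongrightarrow> f x" by (rule filterlim_compose[OF _ XF])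
      then show "(\<lambda>n. s (X (n + N)) x) \<longlonglongrightarrow> f x"
        by (rule LIMSEQ_ignore_initial_segment)
    qed
  qed (use assms in auto)
qed

lemma exp_m1_bound: "\<bar>exp (u::real) - 1\<bar> \<le> \<bar>u\<bar> * exp \<bar>u\<bar>"
proof (cases "u \<ge> 0")
  case True
  have "exp (-u) \<ge> 1 - u" using exp_ge_add_one_self[of "-u"] by simp
  then have "exp u * (1 - u) \<le> 1" by (simp add: exp_minus field_simps)
  then have "exp u - 1 \<le> u * exp u" by (simp add: algebra_simps)
  then show ?thesis using True by simp
next
  case False
  have e1: "exp u \<ge> 1 + u" by (rule exp_ge_add_one_self)
  have "exp u \<le> 1" using False by simp
  then have e2: "\<bar>exp u - 1\<bar> = 1 - exp u" by simp
  have e3: "\<bar>u\<bar> = -u" using False by simp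
  have "exp \<bar>u\<bar> \<ge> 1" by simp
  have "\<bar>exp u - 1\<bar> \<le> \<bar>u\<bar>" using e1 e2 e3 by linarith
  also have "\<dots> \<le> \<bar>u\<bar> * exp \<bar>u\<bar>" using \<open>exp \<bar>u\<bar> \<ge> 1\<close> by (simp add: mult_le_cancel_left1)
  finally show ?thesis .
qed

lemma abs_ln_bound:
  fixes x d :: real assumes x: "x > 0" and d: "d > 0"
  shows "\<bar>ln x\<bar> \<le> (x powr d + x powr (-d)) / d"
proof -
  have l1: "ln y \<le> y" if "y > 0" for y :: real using ln_le_minus_one[OF that] by simp
  have "d * ln x = ln (x powr d)" using x by (simp add: ln_powr)
  also have "\<dots> \<le> x powr d" using l1[of "x powr d"] x by simp
  finally have 1: "d * ln x \<le> x powr d" .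
  have "-(d * ln x) = ln (x powr (-d))" using x by (simp add: ln_powr)
  also have "\<dots> \<le> x powr (-d)" using l1[of "x powr (-d)"] x by simp
  finally have 2: "-(d * ln x) \<le> x powr (-d)" .
  have p: "x powr d > 0" "x powr (-d) > 0" using x by auto
  have "d * \<bar>ln x\<bar> \<le> x powr d + x powr (-d)"
  proof (cases "ln x \<ge> 0")
    case True then have "d * \<bar>ln x\<bar> = d * ln x" by simp
    then show ?thesis using 1 p by linarith
  next
    case False then have "d * \<bar>ln x\<bar> = -(d * ln x)" by simp
    then show ?thesis using 2 p by linarith
  qed
  then show ?thesis using d by (simp add: field_simps)
qed

lemma diffq_bound:
  fixes x d h :: real assumes x: "x > 0" and d: "d > 0" and h: "\<bar>h\<bar> \<le> d" "h \<noteq> 0"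
  shows "\<bar>(x powr h - 1) / h\<bar> \<le> (x powr (2*d) + 2 + x powr (-2*d)) / d"
proof -
  have "\<bar>x powr h - 1\<bar> = \<bar>exp (h * ln x) - 1\<bar>" using x by (simp add: powr_def)
  also have "\<dots> \<le> \<bar>h * ln x\<bar> * exp \<bar>h * ln x\<bar>" by (rule exp_m1_bound)
  finally have 1: "\<bar>(x powr h - 1) / h\<bar> \<le> \<bar>ln x\<bar> * exp \<bar>h * ln x\<bar>"
    using h by (simp add: abs_mult divide_le_eq field_simps)
  have "exp \<bar>h * ln x\<bar> \<le> exp (d * \<bar>ln x\<bar>)"
    using h by (simp add: abs_mult mult_right_mono)
  also have "\<dots> \<le> x powr d + x powr (-d)"
  proof (cases "ln x \<ge> 0")
    case True
    then have "exp (d * \<bar>ln x\<bar>) = x powr d" using x by (simp add: powr_def mult.commute)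
    then show ?thesis by simp
  next
    case False
    then have "exp (d * \<bar>ln x\<bar>) = x powr (-d)" using x by (simp add: powr_def mult.commute)
    then show ?thesis by simp
  qed
  finally have 2: "exp \<bar>h * ln x\<bar> \<le> x powr d + x powr (-d)" .
  have "\<bar>(x powr h - 1) / h\<bar> \<le> ((x powr d + x powr (-d)) / d) * (x powr d + x powr (-d))"
    using 1 abs_ln_bound[OF x d] 2 by (meson abs_ge_zero exp_ge_zero mult_mono order_trans)
  also have "\<dots> = (x powr (2*d) + 2 + x powr (-2*d)) / d"
  proof -
    have e1: "x powr d * x powr d = x powr (2*d)" by (subst powr_add[symmetric]) simp
    have e2: "x powr (-d) * x powr (-d) = x powr (-2*d)" by (subst powr_add[symmetric]) simp
    have e3: "x powr d * x powr (-d) = 1" using x by (subst powr_add[symmetric]) simp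
    have "(x powr d + x powr (-d)) * (x powr d + x powr (-d)) = x powr (2*d) + 2 + x powr (-2*d)"
      by (simp only: distrib_left distrib_right e1 e2 e3 mult.commute[of "x powr (-d)" "x powr d"])
    then show ?thesis by simp
  qed
  finally show ?thesis .
qed


lemma hyp1F1_meas[measurable]: "(\<lambda>y. hyp1F1 b a (f y)) \<in> borel_measurable M" if [measurable]: "f \<in> borel_measurable M"
  unfolding hyp1F1_def by measurable

lemma gfun_meas[measurable]: "gfun a b \<beta> \<in> borel_measurable borel"
  unfolding gfun_def by measurable

lemma hyp1F1_nonneg:
  assumes a: "a > 0" and b: "b > 0" and y: "y \<ge> 0" shows "hyp1F1 b a y \<ge> 0"
proof -
  have s: "t1 b a y sums hyp1F1 b a y" by (rule hyp1F1_sums[OF a])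
  have "t1 b a y n \<ge> 0" for n
    unfolding t1_def using poch_pos[OF a, of n] poch_pos[OF b, of n] y
    by (intro divide_nonneg_pos mult_nonneg_nonneg divide_nonneg_pos) auto
  then show ?thesis using s by (metis sums_iff suminf_nonneg)
qed

lemma hyp2F1_series_same:
  assumes b: "b > 0" and a: "a > 0" and \<beta>: "0 \<le> \<beta>" "\<beta> < 1"
  shows "(1-\<beta>) powr b * hyp2F1_series a b a \<beta> = 1"
proof -
  have "(\<lambda>n. ((-b) gchoose n) * (-\<beta>)^n) sums (1 + (-\<beta>)) powr (-b)"
    by (rule gen_binomial_real) (use \<beta> in simp)
  moreover have "((-b) gchoose n) * (-\<beta>)^n = pochhammer a n * pochhammer b n / (pochhammer a n * fact n) * \<beta> ^ n" for n
  proof -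
    define P where "P = (-1::real)^n"
    have g: "((-b) gchoose n) = P * pochhammer b n / fact n"
      unfolding P_def by (subst gbinomial_pochhammer) simp
    have m: "(-\<beta>)^n = P * \<beta>^n" unfolding P_def by (rule power_minus)
    have pa: "pochhammer a n \<noteq> 0" using poch_pos[OF a, of n] by simp
    have PP: "P * P = 1" unfolding P_def by (simp flip: power_mult_distrib)
    have f: "fact n \<noteq> (0::real)" by simp
    have "((-b) gchoose n) * (-\<beta>)^n = (P * P) * (pochhammer b n * \<beta> ^ n / fact n)"
      unfolding g m using f by (simp add: field_simps)
    also have "\<dots> = pochhammer a n * pochhammer b n / (pochhammer a n * fact n) * \<beta> ^ n"
      unfolding PP using pa f by (simp add: field_simps)
    finally show ?thesis .
  qed
  ultimately have "(\<lambda>n. pochhammer a n * pochhammer b n / (pochhammer a n * fact n) * \<beta> ^ n) sums (1 - \<beta>) powr (-b)"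
    by simp
  then have "hyp2F1_series a b a \<beta> = (1 - \<beta>) powr (-b)"
    unfolding hyp2F1_series_def by (rule sums_unique[symmetric])
  then show ?thesis using \<beta> by (simp add: powr_minus)
qed


definition "Em a b \<beta> h = (LINT x:{0<..}|lborel. gfun a b \<beta> x * x powr h)"
definition "Dl a b \<beta> = (LINT x:{0<..}|lborel. gfun a b \<beta> x * ln x)"

context
  fixes a b \<beta> :: real
  assumes a: "a > 0" and b: "b > 0" and \<beta>0: "0 \<le> \<beta>" and \<beta>1: "\<beta> < 1"
begin


lemma gfun_nonneg:
  assumes x: "x > 0" shows "gfun a b \<beta> x \<ge> 0"
proof -
  have "hyp1F1 b a (\<beta>*x) \<ge> 0" using hyp1F1_nonneg[OF a b] \<beta>0 x by simp
  moreover have "Gamma a > 0" using Gamma_real_pos[OF a] .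
  ultimately show ?thesis unfolding gfun_def using \<beta>1
    by (intro mult_nonneg_nonneg divide_nonneg_pos) auto
qed

lemma mom_int: "a + h > 0 \<Longrightarrow> set_integrable lborel {0<..} (\<lambda>x. gfun a b \<beta> x * x powr h)"
  using moment(1)[OF a b \<beta>0 \<beta>1] .

lemma ln_integrable: "set_integrable lborel {0<..} (\<lambda>x. gfun a b \<beta> x * ln x)"
proof -
  define d where "d = a/2"
  have d: "d > 0" "a + d > 0" "a + (-d) > 0" using a by (auto simp: d_def)
  have B: "set_integrable lborel {0<..} (\<lambda>x. (gfun a b \<beta> x * x powr d + gfun a b \<beta> x * x powr (-d)) * (1/d))"
    using mom_int[OF d(2)] mom_int[OF d(3)] by (intro set_integrable_mult_left set_integral_add(1))
  show ?thesis
    unfolding set_integrable_def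
  proof (rule Bochner_Integration.integrable_bound[OF B[unfolded set_integrable_def]])
    show "(\<lambda>x. indicator {0<..} x *\<^sub>R (gfun a b \<beta> x * ln x)) \<in> borel_measurable lborel"
      by measurable
    show "AE x in lborel. norm (indicator {0<..} x *\<^sub>R (gfun a b \<beta> x * ln x))
       \<le> norm (indicator {0<..} x *\<^sub>R ((gfun a b \<beta> x * x powr d + gfun a b \<beta> x * x powr (-d)) * (1/d)))"
    proof (rule AE_I2)
      fix x :: real
      show "norm (indicator {0<..} x *\<^sub>R (gfun a b \<beta> x * ln x))
       \<le> norm (indicator {0<..} x *\<^sub>R ((gfun a b \<beta> x * x powr d + gfun a b \<beta> x * x powr (-d)) * (1/d)))"
      proof (cases "x > 0")
        case True
        have g: "gfun a b \<beta> x \<ge> 0" by (rule gfun_nonneg[OF True])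
        have "\<bar>gfun a b \<beta> x * ln x\<bar> = gfun a b \<beta> x * \<bar>ln x\<bar>" using g by (simp add: abs_mult)
        also have "\<dots> \<le> gfun a b \<beta> x * ((x powr d + x powr (-d)) / d)"
          by (rule mult_left_mono[OF abs_ln_bound[OF True d(1)] g])
        also have "\<dots> = \<bar>(gfun a b \<beta> x * x powr d + gfun a b \<beta> x * x powr (-d)) * (1/d)\<bar>"
          using g d True by (simp add: field_simps)
        finally show ?thesis using True by simp
      qed simp
    qed
  qed
qed

lemma Em0: "Em a b \<beta> 0 = 1"
proof -
  have "Em a b \<beta> 0 = (1-\<beta>) powr b * Gamma (a+0) / Gamma a * hyp2F1_series (a+0) b a \<beta>"
    unfolding Em_def by (rule moment(2)[OF a b \<beta>0 \<beta>1]) (use a in simp)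
  also have "\<dots> = (1-\<beta>) powr b * hyp2F1_series a b a \<beta>"
    using Gamma_real_pos[OF a] by simp
  also have "\<dots> = 1" by (rule hyp2F1_series_same[OF b a \<beta>0 \<beta>1])
  finally show ?thesis .
qed

end


context
  fixes a b \<beta> :: real
  assumes a: "a > 0" and b: "b > 0" and \<beta>0: "0 \<le> \<beta>" and \<beta>1: "\<beta> < 1"
begin

lemma powr_diffq_lim:
  assumes x: "(x::real) > 0"
  shows "((\<lambda>t. (x powr t - 1) / t) \<longlongrightarrow> ln x) (at 0)"
proof -
  have "((\<lambda>t. exp (t * ln x)) has_field_derivative exp (0 * ln x) * ln x) (at 0)"
    by (auto intro!: derivative_eq_intros)
  then have "((\<lambda>t. (exp (t * ln x) - exp (0 * ln x)) / (t - 0)) \<longlongrightarrow> exp (0 * ln x) * ln x) (at 0)"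
    by (simp only: has_field_derivative_iff)
  then have "((\<lambda>t. (exp (t * ln x) - 1) / t) \<longlongrightarrow> ln x) (at 0)" by simp
  moreover have "(exp (t * ln x) - 1) / t = (x powr t - 1) / t" for t
    using x by (simp add: powr_def mult.commute)
  ultimately show ?thesis by simp
qed

lemma EmD: "(Em a b \<beta> has_field_derivative Dl a b \<beta>) (at 0)"
proof -
  define d where "d = a/4"
  have d: "d > 0" "a + 2*d > 0" "a + (-2*d) > 0" "a + 0 > 0" using a by (auto simp: d_def)
  let ?g = "gfun a b \<beta>"
  define w where "w x = indicator {0<..} x * ((?g x * x powr (2*d) + 2 * (?g x * x powr 0) + ?g x * x powr (-2*d)) / d)" for x
  define s where "s t x = indicator {0<..} x * (?g x * ((x powr t - 1) / t))" for t x
  define f where "f x = indicator {0<..} x * (?g x * ln x)" for x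
  have wi: "integrable lborel w"
  proof -
    have "set_integrable lborel {0<..} (\<lambda>x. (?g x * x powr (2*d) + 2 * (?g x * x powr 0) + ?g x * x powr (-2*d)) / d)"
      using mom_int[OF a b \<beta>0 \<beta>1 d(2)] mom_int[OF a b \<beta>0 \<beta>1 d(3)] mom_int[OF a b \<beta>0 \<beta>1 d(4)]
      by (intro set_integrable_divide set_integral_add(1) set_integrable_mult_right) auto
    then show ?thesis unfolding set_integrable_def w_def by simp
  qed
  have lim: "AE x in lborel. ((\<lambda>t. s t x) \<longlongrightarrow> f x) (at 0)"
  proof (rule AE_I2)
    fix x :: real
    show "((\<lambda>t. s t x) \<longlongrightarrow> f x) (at 0)"
    proof (cases "x > 0")
      case True
      then show ?thesis unfolding s_def f_def
        by (intro tendsto_mult tendsto_const powr_diffq_lim)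
    next
      case False
      then show ?thesis unfolding s_def f_def by simp
    qed
  qed
  have bnd: "AE x in lborel. norm (s t x) \<le> w x" if t0: "t \<noteq> 0" and td: "dist t 0 < d" for t
  proof -
    have t: "t \<noteq> 0 \<and> dist t 0 < d" using t0 td by simp
    show "AE x in lborel. norm (s t x) \<le> w x"
    proof (rule AE_I2)
      fix x :: real
      show "norm (s t x) \<le> w x"
      proof (cases "x > 0")
        case True
        have g: "?g x \<ge> 0" by (rule gfun_nonneg[OF a b \<beta>0 \<beta>1 True])
        have tb: "\<bar>t\<bar> \<le> d" "t \<noteq> 0" using t by auto
        have "norm (s t x) = ?g x * \<bar>(x powr t - 1) / t\<bar>"
          unfolding s_def using True g by (simp add: abs_mult)
        also have "\<dots> \<le> ?g x * ((x powr (2*d) + 2 + x powr (-2*d)) / d)"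
          by (rule mult_left_mono[OF diffq_bound[OF True d(1) tb] g])
        also have "\<dots> = w x" unfolding w_def using True d(1) by (simp add: field_simps)
        finally show ?thesis .
      next
        case False
        then show ?thesis unfolding s_def w_def by simp
      qed
    qed
  qed
  have bound: "eventually (\<lambda>t. AE x in lborel. norm (s t x) \<le> w x) (at 0)"
    unfolding eventually_at using d(1) bnd by blast
  have conv: "((\<lambda>t. integral\<^sup>L lborel (s t)) \<longlongrightarrow> integral\<^sup>L lborel f) (at 0)"
    by (rule dct_at[OF _ _ wi lim bound]) (auto simp: s_def f_def)
  have fD: "integral\<^sup>L lborel f = Dl a b \<beta>"
    unfolding f_def Dl_def set_lebesgue_integral_def by simp
  have evt: "integral\<^sup>L lborel (s t) = (Em a b \<beta> t - Em a b \<beta> 0) / (t - 0)"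
    if t0: "t \<noteq> 0" and td: "dist t 0 < a" for t
  proof -
    have t: "t \<noteq> 0 \<and> dist t 0 < a" using t0 td by simp
    have ta: "a + t > 0" using t by auto
    have "(Em a b \<beta> t - Em a b \<beta> 0) / (t - 0) =
        (LINT x:{0<..}|lborel. ?g x * x powr t - ?g x * x powr 0) / t"
      unfolding Em_def using mom_int[OF a b \<beta>0 \<beta>1 ta] mom_int[OF a b \<beta>0 \<beta>1 d(4)]
      by (subst set_integral_diff(2)) auto
    also have "\<dots> = (LINT x:{0<..}|lborel. (?g x * x powr t - ?g x * x powr 0) / t)"
      by simp
    also have "\<dots> = (LINT x:{0<..}|lborel. ?g x * ((x powr t - 1) / t))"
      by (rule set_lebesgue_integral_cong) (auto simp: field_simps)
    also have "\<dots> = integral\<^sup>L lborel (s t)"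
      unfolding s_def set_lebesgue_integral_def by simp
    finally show "integral\<^sup>L lborel (s t) = (Em a b \<beta> t - Em a b \<beta> 0) / (t - 0)" by simp
  qed
  have ev: "eventually (\<lambda>t. integral\<^sup>L lborel (s t) = (Em a b \<beta> t - Em a b \<beta> 0) / (t - 0)) (at 0)"
    unfolding eventually_at using a evt by blast
  have "((\<lambda>t. (Em a b \<beta> t - Em a b \<beta> 0) / (t - 0)) \<longlongrightarrow> Dl a b \<beta>) (at 0)"
    using tendsto_cong[OF ev] conv fD by simp
  then show ?thesis by (simp only: has_field_derivative_iff)
qed

end


context
  fixes a b \<beta> :: real
  assumes a: "a > 0" and b: "b > 0" and \<beta>0: "0 \<le> \<beta>" and \<beta>1: "\<beta> < 1"
begin

lemma hyp2F1_da_val: "(1-\<beta>) powr b * hyp2F1_da a b a \<beta> = Dl a b \<beta> - Digamma a"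
proof -
  define K where "K = (1-\<beta>) powr b"
  have K: "K > 0" unfolding K_def using \<beta>1 by simp
  have Ga: "Gamma a > 0" using Gamma_real_pos[OF a] .
  have eq: "hyp2F1 t b a \<beta> = Em a b \<beta> (t - a) * (Gamma a / K) / Gamma t" if t: "t > 0" for t
  proof -
    have "Em a b \<beta> (t - a) = K * Gamma (a + (t - a)) / Gamma a * hyp2F1_series (a + (t - a)) b a \<beta>"
      unfolding Em_def K_def by (rule moment(2)[OF a b \<beta>0 \<beta>1]) (use t in simp)
    then have "Em a b \<beta> (t - a) = K * Gamma t / Gamma a * hyp2F1_series t b a \<beta>" by simp
    moreover have "Gamma t > 0" using Gamma_real_pos[OF t] .
    moreover have "hyp2F1 t b a \<beta> = hyp2F1_series t b a \<beta>"
      unfolding hyp2F1_def using \<beta>0 \<beta>1 by simp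
    ultimately show ?thesis using K Ga by (simp add: field_simps)
  qed
  have E0: "(Em a b \<beta> has_field_derivative Dl a b \<beta>) (at (a - a))"
    using EmD[OF a b \<beta>0 \<beta>1] by simp
  have gd: "((\<lambda>t. t - a) has_field_derivative 1) (at a)"
    by (auto intro!: derivative_eq_intros)
  have E1: "((\<lambda>t. Em a b \<beta> (t - a)) has_field_derivative Dl a b \<beta> * 1) (at a)"
    using DERIV_chain2[where f="Em a b \<beta>" and g="\<lambda>t. t - a" and x=a and s=UNIV, OF E0 gd] by simp
  have E2: "((\<lambda>t. Em a b \<beta> (t - a) * (Gamma a / K)) has_field_derivative Dl a b \<beta> * 1 * (Gamma a / K)) (at a)"
    by (rule DERIV_cmult_right[OF E1])
  have G1: "(Gamma has_field_derivative Gamma a * Digamma a) (at a)"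
    by (rule has_field_derivative_Gamma) (rule pos_not_nonpos_Int[OF a])
  have E3: "((\<lambda>t. Em a b \<beta> (t - a) * (Gamma a / K) / Gamma t) has_field_derivative
      ((Dl a b \<beta> * 1 * (Gamma a / K)) * Gamma a - Em a b \<beta> (a - a) * (Gamma a / K) * (Gamma a * Digamma a)) / (Gamma a * Gamma a)) (at a)"
    by (rule DERIV_divide[OF E2 G1]) (use Ga in simp)
  have val: "((Dl a b \<beta> * 1 * (Gamma a / K)) * Gamma a - Em a b \<beta> (a - a) * (Gamma a / K) * (Gamma a * Digamma a)) / (Gamma a * Gamma a)
      = (Dl a b \<beta> - Digamma a) / K"
    using Em0[OF a b \<beta>0 \<beta>1] Ga K by (simp add: field_simps)
  have ev: "eventually (\<lambda>t. hyp2F1 t b a \<beta> = Em a b \<beta> (t - a) * (Gamma a / K) / Gamma t) (nhds a)"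
  proof -
    have "eventually (\<lambda>t. t \<in> {0<..}) (nhds a)" by (rule eventually_nhds_in_open) (use a in auto)
    then show ?thesis by eventually_elim (use eq in auto)
  qed
  have "((\<lambda>t. hyp2F1 t b a \<beta>) has_field_derivative (Dl a b \<beta> - Digamma a) / K) (at a)"
    using E3 unfolding val by (subst DERIV_cong_ev[OF refl ev refl])
  then have "hyp2F1_da a b a \<beta> = (Dl a b \<beta> - Digamma a) / K"
    unfolding hyp2F1_da_def by (rule DERIV_imp_deriv)
  then show ?thesis using K unfolding K_def[symmetric] by simp
qed

end


lemma poch_neg_nat:
  assumes "j \<le> k"
  shows "pochhammer (- real k) j = (-1)^j * fact k / fact (k - j)"
proof -
  have "pochhammer (- real k) j = (-1)^j * pochhammer (real k - real j + 1) j"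
    by (rule pochhammer_minus)
  also have "pochhammer (real k - real j + 1) j = (real k gchoose j) * fact j"
    by (simp add: gbinomial_pochhammer')
  also have "real k gchoose j = fact k / (fact j * fact (k - j))"
    using binomial_gbinomial[of k j, where 'a=real] binomial_fact[OF assms, where 'a=real] by simp
  finally show ?thesis by simp
qed

lemma alg1: "(A::real) / B * X / F1 * (Z / F2) = A / (B*F1*F2) * (X*Z)"
  by (simp add: divide_inverse mult_ac inverse_mult_distrib)

lemma alg2: "(Fk::real) \<noteq> 0 \<Longrightarrow> (A * (S * Fk / F2) / (F1*B)) * (Y / Fk) = A / (B*F1*F2) * (S*Y)"
  by (simp add: divide_inverse mult_ac inverse_mult_distrib)

lemma kummer_coeff:
  assumes c: "c > 0"
  shows "(\<Sum>i\<le>k. t1 (c+s) c (-y) i * (y^(k-i) / fact (k-i))) = t1 (-s) c y k"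
proof -
  have vm: "(\<Sum>j=0..k. pochhammer (c+s) j * pochhammer (- real k) j / (fact j * pochhammer c j))
      = pochhammer (c - (c+s)) k / pochhammer c k"
  proof -
    have "\<forall>i \<in> {0..<k}. c \<noteq> - of_nat i" using c by auto
    from Vandermonde_pochhammer[OF this, of "c+s"] show ?thesis by simp
  qed
  have "(\<Sum>i\<le>k. t1 (c+s) c (-y) i * (y^(k-i) / fact (k-i)))
      = (\<Sum>i\<le>k. (pochhammer (c+s) i * pochhammer (- real k) i / (fact i * pochhammer c i)) * (y^k / fact k))"
  proof (rule sum.cong[OF refl])
    fix i assume i: "i \<in> {..k}"
    then have ik: "i \<le> k" by simp
    have pc: "pochhammer c i \<noteq> 0" using poch_pos[OF c, of i] by simp
    have yk: "y^i * y^(k-i) = y^k" using ik by (metis le_add_diff_inverse power_add)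
    have yy: "(-y)^i * y^(k-i) = (-1)^i * y^k"
      unfolding power_minus[of y i] using yk by (simp only: mult.assoc)
    show "t1 (c+s) c (-y) i * (y^(k-i) / fact (k-i)) =
      (pochhammer (c+s) i * pochhammer (- real k) i / (fact i * pochhammer c i)) * (y^k / fact k)"
      unfolding t1_def poch_neg_nat[OF ik] alg1 alg2[OF fact_nonzero] yy ..
  qed
  also have "\<dots> = (\<Sum>j=0..k. pochhammer (c+s) j * pochhammer (- real k) j / (fact j * pochhammer c j)) * (y^k / fact k)"
    by (simp only: sum_distrib_right atMost_atLeast0)
  also have "\<dots> = t1 (-s) c y k"
    unfolding vm t1_def by (simp add: field_simps)
  finally show ?thesis .
qed

lemma kummer:
  assumes c: "c > 0"
  shows "hyp1F1 (-s) c y = hyp1F1 (c+s) c (-y) * exp y"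
proof -
  have s1: "summable (\<lambda>k. norm (t1 (c+s) c (-y) k))" by (rule summable_t1[OF c])
  have s2: "summable (\<lambda>k. norm (y^k / fact k))"
    using summable_norm_exp[of y] by (simp add: divide_inverse mult.commute)
  have "hyp1F1 (c+s) c (-y) * exp y = (\<Sum>k. t1 (c+s) c (-y) k) * (\<Sum>k. y^k / fact k)"
  proof -
    have "hyp1F1 (c+s) c (-y) = (\<Sum>k. t1 (c+s) c (-y) k)" unfolding hyp1F1_def t1_def by simp
    moreover have "exp y = (\<Sum>k. y^k / fact k)"
      using exp_converges[of y] by (simp add: sums_iff divide_inverse mult.commute)
    ultimately show ?thesis by simp
  qed
  also have "\<dots> = (\<Sum>k. \<Sum>i\<le>k. t1 (c+s) c (-y) i * (y^(k-i) / fact (k-i)))"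
    by (rule Cauchy_product[OF s1 s2])
  also have "\<dots> = (\<Sum>k. t1 (-s) c y k)" by (simp only: kummer_coeff[OF c])
  also have "\<dots> = hyp1F1 (-s) c y" unfolding hyp1F1_def t1_def by simp
  finally show ?thesis by simp
qed


lemma integral_pos_Ioi:
  fixes f :: "real \<Rightarrow> real"
  assumes int: "integrable lborel (\<lambda>x. indicator {0<..} x * f x)" and pos: "\<And>x. x > 0 \<Longrightarrow> f x > 0"
  shows "integral\<^sup>L lborel (\<lambda>x. indicator {0<..} x * f x) > 0"
proof -
  have nn: "AE x in lborel. 0 \<le> indicator {0<..} x * f x"
    by (rule AE_I2) (auto split: split_indicator dest: pos intro: less_imp_le)
  have ge: "integral\<^sup>L lborel (\<lambda>x. indicator {0<..} x * f x) \<ge> 0"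
    by (rule integral_nonneg_AE[OF nn])
  have "integral\<^sup>L lborel (\<lambda>x. indicator {0<..} x * f x) \<noteq> 0"
  proof
    assume "integral\<^sup>L lborel (\<lambda>x. indicator {0<..} x * f x) = 0"
    then have "AE x in lborel. indicator {0<..} x * f x = 0"
      using integral_nonneg_eq_0_iff_AE[OF int nn] by simp
    then have "AE x in lborel. x \<notin> {0<..1::real}"
      by eventually_elim (auto split: split_indicator dest: pos)
    then have "emeasure lborel {0<..1::real} = 0"
      by (subst (asm) AE_iff_measurable[of "{0<..1}"]) auto
    then show False by simp
  qed
  then show ?thesis using ge by simp
qed

lemma hyp1F1_ge1:
  assumes c: "c > 0" and q: "q > 0" and u: "u \<ge> 0"
  shows "hyp1F1 q c u \<ge> 1"
proof -
  have s: "t1 q c u sums hyp1F1 q c u" by (rule hyp1F1_sums[OF c])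
  have nn: "t1 q c u n \<ge> 0" for n
    unfolding t1_def using poch_pos[OF c, of n] poch_pos[OF q, of n] u
    by (intro divide_nonneg_pos mult_nonneg_nonneg divide_nonneg_pos) auto
  have "sum (t1 q c u) {0} \<le> suminf (t1 q c u)"
    by (rule sum_le_suminf) (use s nn in \<open>auto simp: sums_iff\<close>)
  then show ?thesis using s by (simp add: sums_iff t1_def)
qed

lemma series_pos:
  assumes p: "p > 0" and c: "c > 0" and s: "s > 0" and z: "z < 0" "z > -1"
  shows "hyp2F1_series p (-s) c z > 0"
proof -
  have Gp: "Gamma p > 0" using Gamma_real_pos[OF p] .
  define K where "K n = pochhammer (-s) n * z^n / (pochhammer c n * fact n * Gamma p)" for n
  define v where "v n y = indicator {0<..} y * (y powr (p-1) * exp (-y) / Gamma p * t1 (-s) c (z*y) n)" for n y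
  have vK: "v n y = indicator {0<..} y * (K n * (y powr (p + real n - 1) * exp (-y)))" for n y
  proof (cases "y > 0")
    case True
    have "y powr (p + real n - 1) = y powr (p-1) * y^n"
    proof -
      have "y powr (p + real n - 1) = y powr ((p-1) + real n)" by (simp add: algebra_simps)
      also have "\<dots> = y powr (p-1) * y powr (real n)" by (simp only: powr_add)
      also have "\<dots> = y powr (p-1) * y ^ n" using True by (simp add: powr_realpow)
      finally show ?thesis .
    qed
    then show ?thesis unfolding v_def K_def t1_def using True
      by (simp add: power_mult_distrib field_simps)
  qed (simp add: v_def)
  have pn: "p + real n > 0" for n using p by simp
  have vfun: "v n = (\<lambda>y. indicator {0<..} y *\<^sub>R (K n * (y powr (p + real n - 1) * exp (-y))))" for n
    by (intro ext) (simp add: vK)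
  have vi: "integrable lborel (v n)" for n
  proof -
    have "set_integrable lborel {0<..} (\<lambda>y. K n * (y powr (p + real n - 1) * exp (-y)))"
      using Gamma_lborel(1)[OF pn[of n]] by (rule set_integrable_mult_right)
    then show ?thesis unfolding set_integrable_def vfun .
  qed
  have vint: "integral\<^sup>L lborel (v n) = t2 p (-s) c z n" for n
  proof -
    have "integral\<^sup>L lborel (v n) = K n * Gamma (p + real n)"
      unfolding vK using Gamma_lborel(2)[OF pn[of n]]
      by (simp add: set_lebesgue_integral_def mult.left_commute)
    also have "\<dots> = t2 p (-s) c z n"
      unfolding K_def t2_def poch_Gamma[OF p] using Gp poch_pos[OF c, of n] by (simp add: field_simps)
    finally show ?thesis .
  qed
  have vabs: "integral\<^sup>L lborel (\<lambda>y. norm (v n y)) = norm (t2 p (-s) c z n)" for n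
  proof -
    have "(\<lambda>y. norm (v n y)) = (\<lambda>y. indicator {0<..} y * (\<bar>K n\<bar> * (y powr (p + real n - 1) * exp (-y))))"
      unfolding vK by (auto simp: abs_mult split: split_indicator)
    then have "integral\<^sup>L lborel (\<lambda>y. norm (v n y)) = \<bar>K n\<bar> * Gamma (p + real n)"
      using Gamma_lborel(2)[OF pn[of n]]
      by (simp add: set_lebesgue_integral_def mult.left_commute)
    also have "\<dots> = \<bar>K n * Gamma (p + real n)\<bar>" using Gamma_real_pos[OF pn[of n]] by (simp add: abs_mult)
    also have "K n * Gamma (p + real n) = t2 p (-s) c z n"
      unfolding K_def t2_def poch_Gamma[OF p] using Gp poch_pos[OF c, of n] by (simp add: field_simps)
    finally show ?thesis by simp
  qed
  have zab: "\<bar>z\<bar> < 1" using z by simp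
  have sum_abs: "summable (\<lambda>n. integral\<^sup>L lborel (\<lambda>y. norm (v n y)))"
    unfolding vabs by (rule summable_t2[OF c zab])
  have vsum: "(\<lambda>n. v n y) sums (indicator {0<..} y * (y powr (p-1) * exp (-y) / Gamma p * hyp1F1 (-s) c (z*y)))" for y
    unfolding v_def by (intro sums_mult sums_mult hyp1F1_sums[OF c])
  have AEs: "AE y in lborel. summable (\<lambda>n. norm (v n y))"
  proof (rule AE_I2)
    fix y
    have "summable (\<lambda>n. norm (indicator {0<..} y * (y powr (p-1) * exp (-y) / Gamma p)) * norm (t1 (-s) c (z*y) n))"
      by (rule summable_mult[OF summable_t1[OF c]])
    moreover have "(\<lambda>n. norm (v n y)) = (\<lambda>n. norm (indicator {0<..} y * (y powr (p-1) * exp (-y) / Gamma p)) * norm (t1 (-s) c (z*y) n))"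
      unfolding v_def by (intro ext) (simp only: norm_mult mult.assoc)
    ultimately show "summable (\<lambda>n. norm (v n y))" by simp
  qed
  have m2: "(\<integral>y. (\<Sum>n. v n y) \<partial>lborel) = (\<Sum>n. integral\<^sup>L lborel (v n))"
    by (rule integral_suminf[OF vi AEs sum_abs])
  have m1: "integrable lborel (\<lambda>y. \<Sum>n. v n y)"
    by (rule integrable_suminf[OF vi AEs sum_abs])
  have eqf: "(\<lambda>y. \<Sum>n. v n y) = (\<lambda>y. indicator {0<..} y * (y powr (p-1) * exp (-y) / Gamma p * hyp1F1 (-s) c (z*y)))"
    using vsum by (intro ext sums_unique[symmetric])
  have "hyp2F1_series p (-s) c z = (\<Sum>n. t2 p (-s) c z n)"
    unfolding hyp2F1_series_def t2_def by (rule refl)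
  also have "\<dots> = (\<Sum>n. integral\<^sup>L lborel (v n))" by (simp add: vint)
  also have "\<dots> = integral\<^sup>L lborel (\<lambda>y. indicator {0<..} y * (y powr (p-1) * exp (-y) / Gamma p * hyp1F1 (-s) c (z*y)))"
    using m2 unfolding eqf by simp
  also have "\<dots> > 0"
  proof (rule integral_pos_Ioi)
    show "integrable lborel (\<lambda>y. indicator {0<..} y * (y powr (p-1) * exp (-y) / Gamma p * hyp1F1 (-s) c (z*y)))"
      using m1 unfolding eqf .
    fix y :: real assume y: "y > 0"
    have "hyp1F1 (-s) c (z*y) = hyp1F1 (c+s) c (-(z*y)) * exp (z*y)" by (rule kummer[OF c])
    moreover have "hyp1F1 (c+s) c (-(z*y)) \<ge> 1"
      using hyp1F1_ge1[of c "c+s" "-(z*y)"] c s z y mult_neg_pos[of z y] by simp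
    ultimately have "hyp1F1 (-s) c (z*y) > 0" by (simp add: less_le_trans[OF zero_less_one])
    then show "y powr (p-1) * exp (-y) / Gamma p * hyp1F1 (-s) c (z*y) > 0"
      using y Gp by simp
  qed
  finally show ?thesis .
qed


lemma series_ge1:
  assumes p: "p > 0" and q: "q > 0" and c: "c > 0" and w: "0 \<le> w" "w < 1"
  shows "hyp2F1_series p q c w \<ge> 1"
proof -
  have sm: "summable (t2 p q c w)"
    by (rule summable_norm_cancel, rule summable_t2[OF c]) (use w in simp)
  have nn: "t2 p q c w n \<ge> 0" for n
    unfolding t2_def using poch_pos[OF c, of n] poch_pos[OF p, of n] poch_pos[OF q, of n] w
    by (intro mult_nonneg_nonneg divide_nonneg_pos) auto
  have "sum (t2 p q c w) {0} \<le> suminf (t2 p q c w)"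
    by (rule sum_le_suminf[OF sm]) (use nn in auto)
  moreover have "hyp2F1_series p q c w = suminf (t2 p q c w)"
    unfolding hyp2F1_series_def t2_def by (rule refl)
  ultimately show ?thesis by (simp add: t2_def)
qed

lemma Calpha_pos:
  fixes mX mY OX OY \<alpha> :: real
  assumes "mX > 0" and "mY > 0" and "OX > 0" and "OY > 0" and "\<alpha> > 0"
  shows "C_alpha mX mY OX OY \<alpha> > 0"
proof -
  define z where "z = - (mX * OY) / (mY * OX)"
  define s where "s = 2 / \<alpha>"
  have s: "s > 0" using assms by (simp add: s_def)
  have z: "z < 0" using assms by (simp add: z_def divide_neg_pos)
  have ms: "- 2 / \<alpha> = - s" by (simp add: s_def)
  have H: "hyp2F1 mY (- 2 / \<alpha>) mX z > 0"
  proof (cases "\<bar>z\<bar> < 1")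
    case True
    then have "hyp2F1 mY (- 2 / \<alpha>) mX z = hyp2F1_series mY (-s) mX z"
      unfolding hyp2F1_def ms by simp
    also have "\<dots> > 0" by (rule series_pos) (use assms s z True in auto)
    finally show ?thesis .
  next
    case False
    define w where "w = z / (z - 1)"
    have w: "0 \<le> w" "w < 1" using z by (auto simp: w_def divide_simps)
    have "hyp2F1 mY (- 2 / \<alpha>) mX z = (1 - z) powr (- mY) * hyp2F1_series mY (mX - (- s)) mX w"
      unfolding hyp2F1_def ms w_def using False by simp
    also have "\<dots> > 0"
    proof (rule mult_pos_pos)
      show "(1 - z) powr (- mY) > 0" using z by simp
      have "hyp2F1_series mY (mX - (- s)) mX w \<ge> 1"
        by (rule series_ge1) (use assms s w in auto)
      then show "hyp2F1_series mY (mX - (- s)) mX w > 0" by simp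
    qed
    finally show ?thesis .
  qed
  have "mX + 2/\<alpha> > 0" using assms by (simp add: add_pos_pos)
  then have G: "Gamma mX > 0" "Gamma (mX + 2/\<alpha>) > 0"
    using assms by (auto intro!: Gamma_real_pos)
  have "Gamma mX / (Gamma (mX + 2 / \<alpha>) * hyp2F1 mY (- 2 / \<alpha>) mX (- (mX * OY) / (mY * OX))) > 0"
    using G H unfolding z_def by simp
  then show ?thesis unfolding C_alpha_def by (simp only: powr_gt_zero)
qed

lemma ln1p_bound:
  fixes t :: real assumes t: "t > 0"
  shows "0 \<le> ln (1 + t)" "ln (1 + t) \<le> ln 2 + \<bar>ln t\<bar>"
proof -
  show "0 \<le> ln (1 + t)" using t by simp
  show "ln (1 + t) \<le> ln 2 + \<bar>ln t\<bar>"
  proof (cases "t \<le> 1")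
    case True
    then have "ln (1 + t) \<le> ln 2" using t by simp
    then show ?thesis by simp
  next
    case False
    then have "ln (1 + t) \<le> ln (2 * t)" using t by simp
    also have "\<dots> = ln 2 + ln t" using t by (simp add: ln_mult)
    finally show ?thesis by simp
  qed
qed


lemma beta_props:
  fixes mX mY OX OY :: real
  assumes "mX > 0" and "mY > 0" and "OX > 0" and "OY > 0"
  shows "0 < BX_beta mX mY OX OY" "BX_beta mX mY OX OY < 1"
    "1 - BX_beta mX mY OX OY = mY * OX / (mY * OX + mX * OY)"
proof -
  have d: "mY * OX + mX * OY > 0" using assms by (simp add: add_pos_pos)
  have n: "mX * OY > 0" using assms by simp
  show "0 < BX_beta mX mY OX OY" unfolding BX_beta_def using d n by simp
  show "BX_beta mX mY OX OY < 1" unfolding BX_beta_def using d n assms by (simp add: divide_less_eq)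
  show "1 - BX_beta mX mY OX OY = mY * OX / (mY * OX + mX * OY)"
    unfolding BX_beta_def using d by (simp add: field_simps)
qed

lemma pdf_eq:
  fixes mX mY OX OY r :: real
  assumes mX: "mX > 0" and mY: "mY > 0" and OX: "OX > 0" and OY: "OY > 0" and r: "r > 0"
  shows "BX_pdf mX mY OX OY r = 2 * (mX/OX) * r * gfun mX mY (BX_beta mX mY OX OY) ((mX/OX) * r\<^sup>2)"
proof -
  define k where "k = mX / OX"
  define \<beta> where "\<beta> = BX_beta mX mY OX OY"
  have k: "k > 0" using mX OX by (simp add: k_def)
  have b1: "1 - \<beta> = mY * OX / (mY * OX + mX * OY)" unfolding \<beta>_def by (rule beta_props(3)[OF mX mY OX OY])
  have arg: "\<beta> * (k * r\<^sup>2) = mX\<^sup>2 * OY * r\<^sup>2 / (OX * (mY * OX + mX * OY))"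
    unfolding \<beta>_def k_def BX_beta_def using mX mY OX OY by (simp add: field_simps power2_eq_square)
  have pw: "2 * k * r * (k * r\<^sup>2) powr (mX - 1) = 2 * r powr (2 * mX - 1) * k powr mX"
  proof -
    have r2: "r\<^sup>2 = r powr 2" using r by (simp add: powr_numeral)
    have "(k * r\<^sup>2) powr (mX - 1) = k powr (mX - 1) * (r\<^sup>2) powr (mX - 1)"
      using k by (simp add: powr_mult)
    also have "(r\<^sup>2) powr (mX - 1) = (r powr 2) powr (mX - 1)" by (simp only: r2)
    also have "(r powr 2) powr (mX - 1) = r powr (2 * mX - 2)"
      by (simp add: powr_powr algebra_simps)
    finally have e: "(k * r\<^sup>2) powr (mX - 1) = k powr (mX - 1) * r powr (2 * mX - 2)" .
    have e1: "k * k powr (mX - 1) = k powr mX"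
      using k by (simp add: powr_minus_divide field_simps powr_diff)
    have e2: "r * r powr (2 * mX - 2) = r powr (2 * mX - 1)"
    proof -
      have "r powr (2 * mX - 1) = r powr ((2 * mX - 2) + 1)" by simp
      also have "\<dots> = r powr (2 * mX - 2) * r powr 1" by (rule powr_add)
      also have "\<dots> = r powr (2 * mX - 2) * r" using r by simp
      finally show ?thesis by simp
    qed
    have "2 * k * r * (k powr (mX - 1) * r powr (2 * mX - 2)) = 2 * (k * k powr (mX - 1)) * (r * r powr (2 * mX - 2))"
      by (simp only: mult_ac)
    also have "\<dots> = 2 * r powr (2 * mX - 1) * k powr mX" unfolding e1 e2 by (simp only: mult_ac)
    finally show ?thesis unfolding e .
  qed
  have "2 * k * r * gfun mX mY \<beta> (k * r\<^sup>2) =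
      (2 * k * r * (k * r\<^sup>2) powr (mX - 1)) * (1-\<beta>) powr mY / Gamma mX * hyp1F1 mY mX (\<beta> * (k * r\<^sup>2)) * exp (-(k * r\<^sup>2))"
    unfolding gfun_def by (simp add: algebra_simps)
  also have "\<dots> = (2 * r powr (2 * mX - 1) * k powr mX) * (mY * OX / (mY * OX + mX * OY)) powr mY / Gamma mX
      * hyp1F1 mY mX (mX\<^sup>2 * OY * r\<^sup>2 / (OX * (mY * OX + mX * OY))) * exp (-(k * r\<^sup>2))"
    by (simp only: pw b1 arg)
  also have "\<dots> = BX_pdf mX mY OX OY r"
    unfolding BX_pdf_def k_def by (simp add: algebra_simps)
  finally show ?thesis unfolding k_def \<beta>_def by simp
qed

lemma snr_eq:
  "aBX_snr mX mY OX OY \<alpha> \<gamma>b r = \<gamma>b * (C_alpha mX mY OX OY \<alpha> * ((mX/OX) * r\<^sup>2)) powr (2/\<alpha>)"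
  unfolding aBX_snr_def by (simp add: algebra_simps)


lemma bx_transfer:
  fixes mX mY OX OY :: real and H :: "real \<Rightarrow> real"
  assumes mX: "mX > 0" and mY: "mY > 0" and OX: "OX > 0" and OY: "OY > 0"
    and Hm[measurable]: "H \<in> borel_measurable borel"
  shows "set_integrable lborel {0<..} (\<lambda>r. BX_pdf mX mY OX OY r * H ((mX/OX) * r\<^sup>2))
          \<longleftrightarrow> set_integrable lborel {0<..} (\<lambda>x. gfun mX mY (BX_beta mX mY OX OY) x * H x)"
    and "(LINT r:{0<..}|lborel. BX_pdf mX mY OX OY r * H ((mX/OX) * r\<^sup>2))
          = (LINT x:{0<..}|lborel. gfun mX mY (BX_beta mX mY OX OY) x * H x)"
proof -
  have k: "mX/OX > 0" using mX OX by simp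
  let ?g = "gfun mX mY (BX_beta mX mY OX OY)"
  have eq: "BX_pdf mX mY OX OY r * H ((mX/OX) * r\<^sup>2) = 2 * (mX/OX) * r * (?g ((mX/OX) * r\<^sup>2) * H ((mX/OX) * r\<^sup>2))"
    if "r \<in> {0<..}" for r
    using pdf_eq[OF mX mY OX OY, of r] that by simp
  have m: "(\<lambda>x. ?g x * H x) \<in> borel_measurable borel" by measurable
  show "set_integrable lborel {0<..} (\<lambda>r. BX_pdf mX mY OX OY r * H ((mX/OX) * r\<^sup>2))
          \<longleftrightarrow> set_integrable lborel {0<..} (\<lambda>x. ?g x * H x)"
  proof -
    have "set_integrable lborel {0<..} (\<lambda>r. BX_pdf mX mY OX OY r * H ((mX/OX) * r\<^sup>2)) =
      set_integrable lborel {0<..} (\<lambda>r. 2 * (mX/OX) * r * (?g ((mX/OX) * r\<^sup>2) * H ((mX/OX) * r\<^sup>2)))"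
      by (rule set_integrable_cong) (simp_all only: eq)
    then show ?thesis using subst_sq(1)[OF k m] by simp
  qed
  show "(LINT r:{0<..}|lborel. BX_pdf mX mY OX OY r * H ((mX/OX) * r\<^sup>2))
          = (LINT x:{0<..}|lborel. ?g x * H x)"
  proof -
    have "(LINT r:{0<..}|lborel. BX_pdf mX mY OX OY r * H ((mX/OX) * r\<^sup>2)) =
      (LINT r:{0<..}|lborel. 2 * (mX/OX) * r * (?g ((mX/OX) * r\<^sup>2) * H ((mX/OX) * r\<^sup>2)))"
      by (rule set_lebesgue_integral_cong) (simp, use eq in blast)
    then show ?thesis using subst_sq(2)[OF k m] by simp
  qed
qed


theorem theorem4:
  fixes mX mY OX OY \<alpha> :: real
  assumes "mX > 0" and "mY > 0" and "OX > 0" and "OY > 0" and "\<alpha> > 0"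
  shows "(\<forall>\<gamma>b>0.
           set_integrable lborel {0<..}
             (\<lambda>r. BX_pdf mX mY OX OY r * log 2 (aBX_snr mX mY OX OY \<alpha> \<gamma>b r))
         \<and> (LINT r:{0<..}|lborel. BX_pdf mX mY OX OY r * log 2 (aBX_snr mX mY OX OY \<alpha> \<gamma>b r))
             = asym_A mX mY OX OY \<alpha> \<gamma>b)
         \<and> ((\<lambda>\<gamma>b. ergodic_capacity mX mY OX OY \<alpha> \<gamma>b - asym_A mX mY OX OY \<alpha> \<gamma>b)
           \<longlongrightarrow> 0) at_top"
proof -
  note mX = assms(1) and mY = assms(2) and OX = assms(3) and OY = assms(4) and \<alpha> = assms(5)
  define \<beta> where "\<beta> = BX_beta mX mY OX OY"
  define C where "C = C_alpha mX mY OX OY \<alpha>"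
  define g where "g = gfun mX mY \<beta>"
  have \<beta>: "0 < \<beta>" "\<beta> < 1" unfolding \<beta>_def using beta_props[OF mX mY OX OY] by auto
  have \<beta>0: "0 \<le> \<beta>" using \<beta> by simp
  have C: "C > 0" unfolding C_def by (rule Calpha_pos[OF mX mY OX OY \<alpha>])
  have gm[measurable]: "g \<in> borel_measurable borel" unfolding g_def by measurable
  have gnn: "g x \<ge> 0" if "x > 0" for x
    unfolding g_def by (rule gfun_nonneg[OF mX mY \<beta>0 \<beta>(2) that])
  have lnint: "set_integrable lborel {0<..} (\<lambda>x. g x * ln x)"
    unfolding g_def by (rule ln_integrable[OF mX mY \<beta>0 \<beta>(2)])
  have gint: "set_integrable lborel {0<..} g"
  proof -
    have "set_integrable lborel {0<..} (\<lambda>x. g x * x powr 0)"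
      unfolding g_def by (rule mom_int[OF mX mY \<beta>0 \<beta>(2)]) (use mX in simp)
    moreover have "set_integrable lborel {0<..} (\<lambda>x. g x * x powr 0) = set_integrable lborel {0<..} g"
      by (rule set_integrable_cong) auto
    ultimately show ?thesis by simp
  qed
  have g1: "(LINT x:{0<..}|lborel. g x) = 1"
  proof -
    have "(LINT x:{0<..}|lborel. g x) = (LINT x:{0<..}|lborel. g x * x powr 0)"
      by (rule set_lebesgue_integral_cong) auto
    also have "\<dots> = 1" using Em0[OF mX mY \<beta>0 \<beta>(2)] unfolding Em_def g_def .
    finally show ?thesis .
  qed
  have absint: "set_integrable lborel {0<..} (\<lambda>x. g x * \<bar>ln x\<bar>)"
  proof -
    have "set_integrable lborel {0<..} (\<lambda>x. \<bar>g x * ln x\<bar>)" by (rule set_integrable_abs[OF lnint])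
    moreover have "set_integrable lborel {0<..} (\<lambda>x. \<bar>g x * ln x\<bar>) = set_integrable lborel {0<..} (\<lambda>x. g x * \<bar>ln x\<bar>)"
      by (rule set_integrable_cong) (auto simp: abs_mult gnn)
    ultimately show ?thesis by simp
  qed
  have da: "(1-\<beta>) powr mY * hyp2F1_da mX mY mX \<beta> = (LINT x:{0<..}|lborel. g x * ln x) - Digamma mX"
    using hyp2F1_da_val[OF mX mY \<beta>0 \<beta>(2)] unfolding Dl_def g_def .
  define D where "D = (LINT x:{0<..}|lborel. g x * ln x)"
  define c2 where "c2 = 2 / (\<alpha> * ln 2)"
  define L where "L \<gamma>b x = log 2 (\<gamma>b * (C * x) powr (2/\<alpha>))" for \<gamma>b x
  have Lm[measurable]: "L \<gamma>b \<in> borel_measurable borel" for \<gamma>b unfolding L_def by measurable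
  have Lx: "L \<gamma>b x = (ln \<gamma>b + (2/\<alpha>) * (ln C + ln x)) / ln 2" if "\<gamma>b > 0" "x > 0" for \<gamma>b x
    unfolding L_def log_def using that C by (simp add: ln_mult ln_powr)
  have snr: "log 2 (aBX_snr mX mY OX OY \<alpha> \<gamma>b r) = L \<gamma>b ((mX/OX) * r\<^sup>2)" for \<gamma>b r
    unfolding snr_eq L_def C_def ..
  have asym: "asym_A mX mY OX OY \<alpha> \<gamma>b = (ln \<gamma>b + (2/\<alpha>) * ln C) / ln 2 * 1 + c2 * D" if "\<gamma>b > 0" for \<gamma>b
  proof -
    have "asym_A mX mY OX OY \<alpha> \<gamma>b = 2 / (\<alpha> * ln 2) * (ln (C * \<gamma>b powr (\<alpha> / 2)) + Digamma mX
        + (1 - \<beta>) powr mY * hyp2F1_da mX mY mX \<beta>)"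
      unfolding asym_A_def C_def \<beta>_def ..
    also have "ln (C * \<gamma>b powr (\<alpha> / 2)) = ln C + (\<alpha>/2) * ln \<gamma>b"
      using C that by (simp add: ln_mult ln_powr)
    finally show ?thesis unfolding da D_def[symmetric] c2_def using \<alpha>
      by (simp add: field_simps)
  qed
  have part1: "set_integrable lborel {0<..} (\<lambda>x. g x * L \<gamma>b x) \<and>
      (LINT x:{0<..}|lborel. g x * L \<gamma>b x) = asym_A mX mY OX OY \<alpha> \<gamma>b" if \<gamma>: "\<gamma>b > 0" for \<gamma>b
  proof -
    define c1 where "c1 = (ln \<gamma>b + (2/\<alpha>) * ln C) / ln 2"
    have eqx: "g x * L \<gamma>b x = c1 * g x + c2 * (g x * ln x)" if "x \<in> {0<..}" for x
      using Lx[OF \<gamma>, of x] that unfolding c1_def c2_def by (simp add: field_simps, simp add: add_divide_distrib)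
    have i1: "set_integrable lborel {0<..} (\<lambda>x. c1 * g x + c2 * (g x * ln x))"
      using gint lnint by (intro set_integral_add(1) set_integrable_mult_right) auto
    have "set_integrable lborel {0<..} (\<lambda>x. g x * L \<gamma>b x) = set_integrable lborel {0<..} (\<lambda>x. c1 * g x + c2 * (g x * ln x))"
      by (rule set_integrable_cong) (use eqx in auto)
    with i1 have I: "set_integrable lborel {0<..} (\<lambda>x. g x * L \<gamma>b x)" by simp
    have "(LINT x:{0<..}|lborel. g x * L \<gamma>b x) = (LINT x:{0<..}|lborel. c1 * g x + c2 * (g x * ln x))"
      by (rule set_lebesgue_integral_cong) (use eqx in auto)
    also have "\<dots> = c1 * 1 + c2 * D"
      using gint lnint g1 unfolding D_def by (subst set_integral_add(2)) auto
    also have "\<dots> = asym_A mX mY OX OY \<alpha> \<gamma>b" unfolding asym[OF \<gamma>] c1_def ..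
    finally show ?thesis using I by simp
  qed
  show ?thesis
  proof (intro conjI allI impI)
    fix \<gamma>b :: real assume \<gamma>: "\<gamma>b > 0"
    show "set_integrable lborel {0<..} (\<lambda>r. BX_pdf mX mY OX OY r * log 2 (aBX_snr mX mY OX OY \<alpha> \<gamma>b r))"
      unfolding snr using bx_transfer(1)[OF mX mY OX OY Lm[of \<gamma>b]] part1[OF \<gamma>] unfolding g_def \<beta>_def by simp
    show "(LINT r:{0<..}|lborel. BX_pdf mX mY OX OY r * log 2 (aBX_snr mX mY OX OY \<alpha> \<gamma>b r)) = asym_A mX mY OX OY \<alpha> \<gamma>b"
      unfolding snr using bx_transfer(2)[OF mX mY OX OY Lm[of \<gamma>b]] part1[OF \<gamma>] unfolding g_def \<beta>_def by simp
  next
    show "((\<lambda>\<gamma>b. ergodic_capacity mX mY OX OY \<alpha> \<gamma>b - asym_A mX mY OX OY \<alpha> \<gamma>b) \<longlongrightarrow> 0) at_top"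
    proof -
      define Q where "Q \<gamma>b x = g x * log 2 (1 + inverse (\<gamma>b * (C*x) powr (2/\<alpha>)))" for \<gamma>b x
      define Bc where "Bc c x = c * g x + c2 * (g x * \<bar>ln x\<bar>)" for c x
      have Qm[measurable]: "Q \<gamma>b \<in> borel_measurable borel" for \<gamma>b unfolding Q_def by measurable
      have Bm[measurable]: "Bc c \<in> borel_measurable borel" for c unfolding Bc_def by measurable
      have Bint: "set_integrable lborel {0<..} (Bc c)" for c
        unfolding Bc_def using gint absint by (intro set_integral_add(1) set_integrable_mult_right) auto
      have c2: "c2 > 0" unfolding c2_def using \<alpha> by simp
      have Bmono: "Bc c x \<le> Bc c' x" if "c \<le> c'" "x > 0" for c c' x
        unfolding Bc_def using gnn[OF that(2)] that(1) by (simp add: mult_right_mono)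
      have cle: "(ln 2 + \<bar>ln u\<bar>) / ln 2 - c2 * \<bar>ln x\<bar> \<le> (ln 2 + A) / ln 2"
        if "\<bar>ln u\<bar> \<le> A + (2/\<alpha>) * \<bar>ln x\<bar>" for u x A
      proof -
        have l2: "ln (2::real) > 0" by simp
        have "(ln 2 + \<bar>ln u\<bar>) / ln 2 - c2 * \<bar>ln x\<bar> = (ln 2 + (\<bar>ln u\<bar> - (2/\<alpha>) * \<bar>ln x\<bar>)) / ln 2"
          unfolding c2_def using l2 \<alpha> by (simp add: field_simps)
        also have "\<dots> \<le> (ln 2 + A) / ln 2" using that l2 by (intro divide_right_mono) auto
        finally show ?thesis .
      qed
      have Qgen: "\<bar>Q \<gamma>b x\<bar> \<le> Bc ((ln 2 + \<bar>ln u\<bar>) / ln 2 - c2 * \<bar>ln x\<bar>) x"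
        if x: "x > 0" and \<gamma>: "\<gamma>b > 0" and u: "u > 0" and tu: "inverse (\<gamma>b * (C*x) powr (2/\<alpha>)) \<le> u" for \<gamma>b x u
      proof -
        define t where "t = inverse (\<gamma>b * (C*x) powr (2/\<alpha>))"
        have t: "t > 0" unfolding t_def using x \<gamma> C by simp
        have "ln (1 + t) \<le> ln (1 + u)" using t tu unfolding t_def by simp
        also have "\<dots> \<le> ln 2 + \<bar>ln u\<bar>" by (rule ln1p_bound(2)[OF u])
        finally have l: "ln (1 + t) \<le> ln 2 + \<bar>ln u\<bar>" .
        have l0: "0 \<le> ln (1 + t)" using t by simp
        have "\<bar>Q \<gamma>b x\<bar> = g x * (ln (1 + t) / ln 2)"
          unfolding Q_def t_def[symmetric] log_def using gnn[OF x] l0 by (simp add: abs_mult)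
        also have "\<dots> \<le> g x * ((ln 2 + \<bar>ln u\<bar>) / ln 2)"
          using l gnn[OF x] by (intro mult_left_mono divide_right_mono) auto
        also have "\<dots> = Bc ((ln 2 + \<bar>ln u\<bar>) / ln 2 - c2 * \<bar>ln x\<bar>) x"
          unfolding Bc_def by (simp add: algebra_simps)
        finally show ?thesis .
      qed
      have lnu: "\<bar>ln (\<gamma>b * (C*x) powr (2/\<alpha>))\<bar> \<le> \<bar>ln \<gamma>b\<bar> + (2/\<alpha>) * \<bar>ln C\<bar> + (2/\<alpha>) * \<bar>ln x\<bar>"
        if x: "x > 0" and \<gamma>: "\<gamma>b > 0" for \<gamma>b x
      proof -
        have "ln (\<gamma>b * (C*x) powr (2/\<alpha>)) = ln \<gamma>b + (2/\<alpha>) * ln C + (2/\<alpha>) * ln x"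
          using x \<gamma> C by (simp add: ln_mult ln_powr algebra_simps add_divide_distrib)
        moreover have "\<bar>(2/\<alpha>) * ln C\<bar> = (2/\<alpha>) * \<bar>ln C\<bar>" "\<bar>(2/\<alpha>) * ln x\<bar> = (2/\<alpha>) * \<bar>ln x\<bar>"
          using \<alpha> by (simp_all add: abs_mult)
        moreover have "\<bar>ln \<gamma>b + (2/\<alpha>) * ln C + (2/\<alpha>) * ln x\<bar> \<le> \<bar>ln \<gamma>b + (2/\<alpha>) * ln C\<bar> + \<bar>(2/\<alpha>) * ln x\<bar>"
          by (rule abs_triangle_ineq)
        moreover have "\<bar>ln \<gamma>b + (2/\<alpha>) * ln C\<bar> \<le> \<bar>ln \<gamma>b\<bar> + \<bar>(2/\<alpha>) * ln C\<bar>"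
          by (rule abs_triangle_ineq)
        ultimately show ?thesis by linarith
      qed
      have Qb: "\<bar>Q \<gamma>b x\<bar> \<le> Bc ((ln 2 + \<bar>ln \<gamma>b\<bar> + (2/\<alpha>) * \<bar>ln C\<bar>) / ln 2) x"
        if x: "x > 0" and \<gamma>: "\<gamma>b > 0" for \<gamma>b x
      proof -
        define u where "u = inverse (\<gamma>b * (C*x) powr (2/\<alpha>))"
        have u: "u > 0" unfolding u_def using x \<gamma> C by simp
        have pos: "0 < \<gamma>b * (C*x) powr (2/\<alpha>)" using x \<gamma> C by simp
        have "ln u = - ln (\<gamma>b * (C*x) powr (2/\<alpha>))" unfolding u_def by (rule ln_inverse)
        then have "\<bar>ln u\<bar> = \<bar>ln (\<gamma>b * (C*x) powr (2/\<alpha>))\<bar>" by simp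
        then have lu: "\<bar>ln u\<bar> \<le> \<bar>ln \<gamma>b\<bar> + (2/\<alpha>) * \<bar>ln C\<bar> + (2/\<alpha>) * \<bar>ln x\<bar>" using lnu[OF x \<gamma>] by simp
        have "\<bar>Q \<gamma>b x\<bar> \<le> Bc ((ln 2 + \<bar>ln u\<bar>) / ln 2 - c2 * \<bar>ln x\<bar>) x"
          by (rule Qgen[OF x \<gamma> u]) (simp add: u_def)
        also have "\<dots> \<le> Bc ((ln 2 + (\<bar>ln \<gamma>b\<bar> + (2/\<alpha>) * \<bar>ln C\<bar>)) / ln 2) x"
          by (rule Bmono[OF cle x]) (use lu in simp)
        also have "(ln 2 + (\<bar>ln \<gamma>b\<bar> + (2/\<alpha>) * \<bar>ln C\<bar>)) = ln 2 + \<bar>ln \<gamma>b\<bar> + (2/\<alpha>) * \<bar>ln C\<bar>" by simp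
        finally show ?thesis .
      qed
      have Qb1: "\<bar>Q \<gamma>b x\<bar> \<le> Bc ((ln 2 + (2/\<alpha>) * \<bar>ln C\<bar>) / ln 2) x"
        if x: "x > 0" and \<gamma>: "\<gamma>b \<ge> 1" for \<gamma>b x
      proof -
        define u where "u = inverse (1 * (C*x) powr (2/\<alpha>))"
        have u: "u > 0" unfolding u_def using x C by simp
        have pos: "0 < 1 * (C*x) powr (2/\<alpha>)" using x C by simp
        have "ln u = - ln (1 * (C*x) powr (2/\<alpha>))" unfolding u_def by (rule ln_inverse)
        then have "\<bar>ln u\<bar> = \<bar>ln (1 * (C*x) powr (2/\<alpha>))\<bar>" by simp
        then have lu: "\<bar>ln u\<bar> \<le> (2/\<alpha>) * \<bar>ln C\<bar> + (2/\<alpha>) * \<bar>ln x\<bar>" using lnu[OF x, of 1] by simp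
        have P: "(C*x) powr (2/\<alpha>) > 0" using C x by simp
        have tu: "inverse (\<gamma>b * (C*x) powr (2/\<alpha>)) \<le> u"
          unfolding u_def using \<gamma> P by (simp add: field_simps)
        have "\<bar>Q \<gamma>b x\<bar> \<le> Bc ((ln 2 + \<bar>ln u\<bar>) / ln 2 - c2 * \<bar>ln x\<bar>) x"
          by (rule Qgen[OF x _ u tu]) (use \<gamma> in simp)
        also have "\<dots> \<le> Bc ((ln 2 + (2/\<alpha>) * \<bar>ln C\<bar>) / ln 2) x"
          by (rule Bmono[OF cle x]) (use lu in simp)
        finally show ?thesis .
      qed
      have Qint: "set_integrable lborel {0<..} (Q \<gamma>b)" if \<gamma>: "\<gamma>b > 0" for \<gamma>b
        unfolding set_integrable_def
      proof (rule Bochner_Integration.integrable_bound[OF Bint[unfolded set_integrable_def]])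
        show "(\<lambda>x. indicator {0<..} x *\<^sub>R Q \<gamma>b x) \<in> borel_measurable lborel" by measurable
        show "AE x in lborel. norm (indicator {0<..} x *\<^sub>R Q \<gamma>b x)
            \<le> norm (indicator {0<..} x *\<^sub>R Bc ((ln 2 + \<bar>ln \<gamma>b\<bar> + (2/\<alpha>) * \<bar>ln C\<bar>) / ln 2) x)"
          by (rule AE_I2) (use order_trans[OF Qb[OF _ \<gamma>] abs_ge_self] in \<open>auto split: split_indicator\<close>)
      qed
      define L1 where "L1 \<gamma>b x = log 2 (1 + \<gamma>b * (C * x) powr (2/\<alpha>))" for \<gamma>b x
      have L1m[measurable]: "L1 \<gamma>b \<in> borel_measurable borel" for \<gamma>b unfolding L1_def by measurable
      have ergeq: "ergodic_capacity mX mY OX OY \<alpha> \<gamma>b - asym_A mX mY OX OY \<alpha> \<gamma>b = (LINT x:{0<..}|lborel. Q \<gamma>b x)"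
        if \<gamma>: "\<gamma>b > 0" for \<gamma>b
      proof -
        have snr1: "log 2 (1 + aBX_snr mX mY OX OY \<alpha> \<gamma>b r) = L1 \<gamma>b ((mX/OX) * r\<^sup>2)" for r
          unfolding snr_eq L1_def C_def ..
        have "ergodic_capacity mX mY OX OY \<alpha> \<gamma>b = (LINT x:{0<..}|lborel. g x * L1 \<gamma>b x)"
          unfolding ergodic_capacity_def snr1 using bx_transfer(2)[OF mX mY OX OY L1m[of \<gamma>b]]
          unfolding g_def \<beta>_def by simp
        also have "\<dots> = (LINT x:{0<..}|lborel. g x * L \<gamma>b x + Q \<gamma>b x)"
        proof (rule set_lebesgue_integral_cong)
          show "{0::real<..} \<in> sets lborel" by simp
          show "\<forall>x. x \<in> {0<..} \<longrightarrow> g x * L1 \<gamma>b x = g x * L \<gamma>b x + Q \<gamma>b x"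
          proof (intro allI impI)
            fix x :: real assume "x \<in> {0<..}"
            then have x: "x > 0" by simp
            define G where "G = \<gamma>b * (C * x) powr (2/\<alpha>)"
            have G: "G > 0" unfolding G_def using \<gamma> C x by simp
            have e: "1 + G = G * (1 + inverse G)" using G by (simp add: field_simps)
            have ip: "0 < 1 + inverse G" using G by (simp add: add_pos_pos)
            have "ln (1 + G) = ln (G * (1 + inverse G))" using e by simp
            also have "\<dots> = ln G + ln (1 + inverse G)" using G ip by (simp add: ln_mult)
            finally have "ln (1 + G) = ln G + ln (1 + inverse G)" .
            then show "g x * L1 \<gamma>b x = g x * L \<gamma>b x + Q \<gamma>b x"
              unfolding L1_def L_def Q_def G_def[symmetric] log_def by (simp add: field_simps)
          qed
        qed
        also have "\<dots> = (LINT x:{0<..}|lborel. g x * L \<gamma>b x) + (LINT x:{0<..}|lborel. Q \<gamma>b x)"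
          using part1[OF \<gamma>] Qint[OF \<gamma>] by (subst set_integral_add(2)) auto
        also have "\<dots> = asym_A mX mY OX OY \<alpha> \<gamma>b + (LINT x:{0<..}|lborel. Q \<gamma>b x)"
          using part1[OF \<gamma>] by simp
        finally show ?thesis by simp
      qed
      define c0 where "c0 = (ln 2 + (2/\<alpha>) * \<bar>ln C\<bar>) / ln 2"
      have conv: "((\<lambda>\<gamma>b. integral\<^sup>L lborel (\<lambda>x. indicator {0<..} x * Q \<gamma>b x)) \<longlongrightarrow> integral\<^sup>L lborel (\<lambda>x. 0::real)) at_top"
      proof -
        have a1: "(\<lambda>x. 0::real) \<in> borel_measurable lborel" by simp
        have a2: "(\<lambda>x. indicator {0<..} x * Q t x) \<in> borel_measurable lborel" for t by measurable
        have a3: "integrable lborel (\<lambda>x. indicator {0<..} x * Bc c0 x)"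
          using Bint[of c0] unfolding set_integrable_def by simp
        have a4: "AE x in lborel. ((\<lambda>i. indicator {0<..} x * Q i x) \<longlongrightarrow> 0) at_top"
        proof (rule AE_I2)
          fix x :: real
          show "((\<lambda>i. indicator {0<..} x * Q i x) \<longlongrightarrow> 0) at_top"
          proof (cases "x > 0")
            case True
            define P where "P = (C*x) powr (2/\<alpha>)"
            have P: "P > 0" unfolding P_def using C True by simp
            have "((\<lambda>i. inverse (i * P)) \<longlongrightarrow> 0) at_top" using P by real_asymp
            then have lg: "((\<lambda>i. log 2 (1 + inverse (i * P))) \<longlongrightarrow> log 2 (1 + 0)) at_top"
              by (intro tendsto_intros) auto
            have "((\<lambda>i. indicator {0<..} x * (g x * log 2 (1 + inverse (i * P)))) \<longlongrightarrow> indicator {0<..} x * (g x * log 2 (1 + 0))) at_top"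
              by (rule tendsto_mult_left[OF tendsto_mult_left[OF lg]])
            then show ?thesis unfolding Q_def P_def by simp
          next
            case False
            then show ?thesis by simp
          qed
        qed
        have a5: "\<forall>\<^sub>F i in at_top. AE x in lborel. norm (indicator {0<..} x * Q i x) \<le> indicator {0<..} x * Bc c0 x"
          using eventually_ge_at_top[of "1::real"]
        proof eventually_elim
          case (elim i)
          show ?case
            by (rule AE_I2) (use Qb1[OF _ elim] in \<open>auto simp: c0_def split: split_indicator\<close>)
        qed
        note X = integral_dominated_convergence_at_top[OF a1 a2 a3 a4 a5]
        show ?thesis using X by simp
      qed
      have ev: "eventually (\<lambda>\<gamma>b. integral\<^sup>L lborel (\<lambda>x. indicator {0<..} x * Q \<gamma>b x) =
          ergodic_capacity mX mY OX OY \<alpha> \<gamma>b - asym_A mX mY OX OY \<alpha> \<gamma>b) at_top"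
        using eventually_gt_at_top[of "0::real"]
        by eventually_elim (simp add: ergeq set_lebesgue_integral_def)
      show ?thesis using tendsto_cong[OF ev] conv by simp
    qed
  qed
qed


end
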